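(* Fix $T\ge1$ and an episode $k$ of Variation-aware UCRL with confidence parameter $\delta$, started at $t_k\le T$. Let $\tilde\rho=\max_{M'\in\mathcal M_k}\rho^*(M')$ be the optimistic average reward computed from the data before $t_k$ with variation parameters $\tilde V^r=V^r_T$, $\tilde V^p=V^p_T$, and let $\tilde\rho^0=\max_{M'\in\mathcal M^0_k}\rho^*(M')$ be the optimistic average reward computed from the same data with variation parameters $\tilde V^r=\tilde V^p=0$. Assume that $\mathcal M_k$ contains all MDPs $M_\tau$, $\tau=1,\dots,T$. Then \[\tilde\rho\le\tilde\rho^0+V^r_T+D\,V^p_T.\]
   Context: Let $\mathcal S$ be a finite set of $S$ states and $\mathcal A$ a finite set of $A$ actions. A (time-homogeneous) MDP has mean rewards $\bar r(s,a)\in[0,1]$ and transition probabilities $p(\cdot\mid s,a)$; it is communicating if every state can be reached from every other with positive probability by suitable actions; its diameter is $\max_{s\ne s'}\min_\pi\mathbb E[T(s'\mid s,\pi)]$ with $T(s'\mid s,\pi)$ the first time $s'$ is reached from $s$ under stationary policy $\pi$. $\rho(M,\pi)=\lim_n\frac1n\mathbb E[\sum_{t=1}^nr_t]$, $\rho^*(M)=\max_\pi\rho(M,\pi)$. Changing environment: for every step $t$ there is an MDP $M_t=(\mathcal S,\mathcal A,\bar r_t,p_t,s_1)$ (fixed in advance); at step $t$ in state $s_t$ the learner chooses $a_t$, receives a reward $r_t\in[0,1]$ with mean $\bar r_t(s_t,a_t)$, and moves to $s_{t+1}\sim p_t(\cdot\mid s_t,a_t)$. Every $M_t$ is communicating with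 diameter at most $D$. Variations: $V^r_T=\sum_{t=1}^{T-1}\max_{s,a}|\bar r_{t+1}(s,a)-\bar r_t(s,a)|$, $V^p_T=\sum_{t=1}^{T-1}\max_{s,a}\|p_{t+1}(\cdot\mid s,a)-p_t(\cdot\mid s,a)\|_1$. In Variation-aware UCRL, episode $k$ starts at step $t_k$; $N_k(s,a)$ is the number of steps $\tau<t_k$ with $(s_\tau,a_\tau)=(s,a)$; $\hat r_k(s,a)=\sum_{\tau<t_k}r_\tau\mathbb 1\{s_\tau=s,a_\tau=a\}/\max(1,N_k(s,a))$, $\hat p_k(s'\mid s,a)=\#\{\tau<t_k:s_\tau=s,a_\tau=a,s_{\tau+1}=s'\}/\max(1,N_k(s,a))$. For variation parameters $\tilde V^r,\tilde V^p\ge0$, the plausible set consists of all MDPs with rewards $\tilde r$, transitions $\tilde p$ satisfying for all $(s,a)$: $|\tilde r(s,a)-\hat r_k(s,a)|\le\tilde V^r+\sqrt{8\log(8SAt_k^3/\delta)/\max(1,N_k(s,a))}$ and $\|\tilde p(\cdot\mid s,a)-\hat p_k(\cdot\mid s,a)\|_1\le\tilde V^p+\sqrt{8S\log(8SAt_k^3/\delta)/\max(1,N_k(s,a))}$; $\mathcal M_k$ is this set for $(\tilde V^r,\tilde V^p)=(V^r_T,V^p_T)$ and $\mathcal M^0_k$ for $(0,0)$. *)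

theory Defs
  imports Complex_Main "HOL-Library.Extended_Nonnegative_Real"
begin

text \<open>An MDP on finite state type 's and action type 'a is given by mean rewards
  r :: 's => 'a => real and transition probabilities p :: 's => 'a => 's => real
  (p s a s' = probability of moving to s' after action a in state s).\<close>

definition is_mdp :: "('s::finite \<Rightarrow> 'a::finite \<Rightarrow> real) \<Rightarrow> ('s \<Rightarrow> 'a \<Rightarrow> 's \<Rightarrow> real) \<Rightarrow> bool" where
  "is_mdp r p \<longleftrightarrow> (\<forall>s a. 0 \<le> r s a \<and> r s a \<le> 1)
     \<and> (\<forall>s a s'. 0 \<le> p s a s') \<and> (\<forall>s a. (\<Sum>s'\<in>UNIV. p s a s') = 1)"

fun state_dist :: "('s::finite \<Rightarrow> 'a \<Rightarrow> 's \<Rightarrow> real) \<Rightarrow> ('s \<Rightarrow> 'a) \<Rightarrow> 's \<Rightarrow> nat \<Rightarrow> 's \<Rightarrow> real" where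
  "state_dist p pol s 0 = (\<lambda>y. if y = s then 1 else 0)"
| "state_dist p pol s (Suc n) = (\<lambda>y. \<Sum>x\<in>UNIV. state_dist p pol s n x * p x (pol x) y)"

definition avg_reward :: "('s::finite \<Rightarrow> 'a \<Rightarrow> real) \<Rightarrow> ('s \<Rightarrow> 'a \<Rightarrow> 's \<Rightarrow> real) \<Rightarrow> 's \<Rightarrow> ('s \<Rightarrow> 'a) \<Rightarrow> real" where
  "avg_reward r p s1 pol =
     lim (\<lambda>n. (\<Sum>i<n. \<Sum>x\<in>UNIV. state_dist p pol s1 i x * r x (pol x)) / real n)"

definition opt_avg_reward :: "('s::finite \<Rightarrow> 'a::finite \<Rightarrow> real) \<Rightarrow> ('s \<Rightarrow> 'a \<Rightarrow> 's \<Rightarrow> real) \<Rightarrow> 's \<Rightarrow> real" where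
  "opt_avg_reward r p s1 = Max (range (avg_reward r p s1))"

text \<open>Probability of not having reached s' within the first n steps, starting in x.\<close>

fun not_hit :: "('s::finite \<Rightarrow> 'a \<Rightarrow> 's \<Rightarrow> real) \<Rightarrow> ('s \<Rightarrow> 'a) \<Rightarrow> 's \<Rightarrow> nat \<Rightarrow> 's \<Rightarrow> real" where
  "not_hit p pol s' 0 = (\<lambda>x. 1)"
| "not_hit p pol s' (Suc n) = (\<lambda>x. \<Sum>y\<in>UNIV - {s'}. p x (pol x) y * not_hit p pol s' n y)"

text \<open>E[T(s'|s,pol)] = sum_n P(T > n), for s \<noteq> s' (possibly infinite).\<close>

definition exp_hit_time :: "('s::finite \<Rightarrow> 'a \<Rightarrow> 's \<Rightarrow> real) \<Rightarrow> ('s \<Rightarrow> 'a) \<Rightarrow> 's \<Rightarrow> 's \<Rightarrow> ennreal" where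
  "exp_hit_time p pol s s' = (\<Sum>n. ennreal (not_hit p pol s' n s))"

definition diameter :: "('s::finite \<Rightarrow> 'a \<Rightarrow> 's \<Rightarrow> real) \<Rightarrow> ennreal" where
  "diameter p = (SUP ss \<in> {(s, s'). s \<noteq> s'}. INF pol. exp_hit_time p pol (fst ss) (snd ss))"

definition communicating :: "('s::finite \<Rightarrow> 'a \<Rightarrow> 's \<Rightarrow> real) \<Rightarrow> bool" where
  "communicating p \<longleftrightarrow> (\<forall>s s'. \<exists>pol n. state_dist p pol s n s' > 0)"

definition var_r :: "(nat \<Rightarrow> 's::finite \<Rightarrow> 'a::finite \<Rightarrow> real) \<Rightarrow> nat \<Rightarrow> real" where
  "var_r rb T = (\<Sum>t\<in>{1..<T}. Max (range (\<lambda>(s, a). \<bar>rb (Suc t) s a - rb t s a\<bar>)))"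

definition var_p :: "(nat \<Rightarrow> 's::finite \<Rightarrow> 'a::finite \<Rightarrow> 's \<Rightarrow> real) \<Rightarrow> nat \<Rightarrow> real" where
  "var_p pb T = (\<Sum>t\<in>{1..<T}.
      Max (range (\<lambda>(s, a). \<Sum>s'\<in>UNIV. \<bar>pb (Suc t) s a s' - pb t s a s'\<bar>)))"

text \<open>Empirical quantities from the history (states st, actions ac, rewards rw,
  steps 1,2,...) before step tk.\<close>

definition visits :: "(nat \<Rightarrow> 's) \<Rightarrow> (nat \<Rightarrow> 'a) \<Rightarrow> nat \<Rightarrow> 's \<Rightarrow> 'a \<Rightarrow> nat set" where
  "visits st ac tk s a = {\<tau>. 1 \<le> \<tau> \<and> \<tau> < tk \<and> st \<tau> = s \<and> ac \<tau> = a}"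

definition N_count :: "(nat \<Rightarrow> 's) \<Rightarrow> (nat \<Rightarrow> 'a) \<Rightarrow> nat \<Rightarrow> 's \<Rightarrow> 'a \<Rightarrow> nat" where
  "N_count st ac tk s a = card (visits st ac tk s a)"

definition r_hat :: "(nat \<Rightarrow> 's) \<Rightarrow> (nat \<Rightarrow> 'a) \<Rightarrow> (nat \<Rightarrow> real) \<Rightarrow> nat \<Rightarrow> 's \<Rightarrow> 'a \<Rightarrow> real" where
  "r_hat st ac rw tk s a =
     (\<Sum>\<tau>\<in>visits st ac tk s a. rw \<tau>) / real (max 1 (N_count st ac tk s a))"

definition p_hat :: "(nat \<Rightarrow> 's) \<Rightarrow> (nat \<Rightarrow> 'a) \<Rightarrow> nat \<Rightarrow> 's \<Rightarrow> 'a \<Rightarrow> 's \<Rightarrow> real" where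
  "p_hat st ac tk s a s' =
     real (card {\<tau> \<in> visits st ac tk s a. st (Suc \<tau>) = s'}) / real (max 1 (N_count st ac tk s a))"

definition plausible_set ::
  "real \<Rightarrow> real \<Rightarrow> real \<Rightarrow> (nat \<Rightarrow> 's::finite) \<Rightarrow> (nat \<Rightarrow> 'a::finite) \<Rightarrow> (nat \<Rightarrow> real) \<Rightarrow> nat
   \<Rightarrow> (('s \<Rightarrow> 'a \<Rightarrow> real) \<times> ('s \<Rightarrow> 'a \<Rightarrow> 's \<Rightarrow> real)) set" where
  "plausible_set Vr Vp \<delta> st ac rw tk = {(r', p'). is_mdp r' p' \<and>
     (\<forall>s a.
        \<bar>r' s a - r_hat st ac rw tk s a\<bar> \<le> Vr +
          sqrt (8 * ln (8 * real (card (UNIV :: 's set)) * real (card (UNIV :: 'a set)) * real tk ^ 3 / \<delta>)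
                / real (max 1 (N_count st ac tk s a)))
      \<and> (\<Sum>s'\<in>UNIV. \<bar>p' s a s' - p_hat st ac tk s a s'\<bar>) \<le> Vp +
          sqrt (8 * real (card (UNIV :: 's set)) * ln (8 * real (card (UNIV :: 's set)) * real (card (UNIV :: 'a set)) * real tk ^ 3 / \<delta>)
                / real (max 1 (N_count st ac tk s a))))}"

definition optimistic_rho :: "(('s::finite \<Rightarrow> 'a::finite \<Rightarrow> real) \<times> ('s \<Rightarrow> 'a \<Rightarrow> 's \<Rightarrow> real)) set \<Rightarrow> 's \<Rightarrow> real" where
  "optimistic_rho Ms s1 = Sup ((\<lambda>(r', p'). opt_avg_reward r' p' s1) ` Ms)"

end

theory Submission
  imports Defs "HOL-Analysis.Analysis"
begin


lemma subseq_unique_conv: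
  fixes X :: "nat \<Rightarrow> real ^ 'n"
  assumes bd: "bounded (range X)"
    and uq: "\<And>r1 r2 l1 l2. strict_mono r1 \<Longrightarrow> strict_mono r2 \<Longrightarrow> (X \<circ> r1) \<longlonglongrightarrow> l1
       \<Longrightarrow> (X \<circ> r2) \<longlonglongrightarrow> l2 \<Longrightarrow> l1 = l2"
  shows "convergent X"
proof -
  obtain l r where r: "strict_mono r" "(X \<circ> r) \<longlonglongrightarrow> l"
    using bounded_imp_convergent_subsequence[OF bd] by blast
  have "X \<longlonglongrightarrow> l"
  proof (rule ccontr)
    assume "\<not> X \<longlonglongrightarrow> l"
    then obtain e where e: "e > 0" "\<not> eventually (\<lambda>n. dist (X n) l < e) sequentially"
      unfolding tendsto_iff by blast
    then obtain r2 :: "nat \<Rightarrow> nat" where r2: "strict_mono r2" "\<And>n. \<not> dist (X (r2 n)) l < e"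
      using not_eventually_sequentiallyD by blast
    have "bounded (range (X \<circ> r2))"
      using bd by (rule bounded_subset) auto
    then obtain l' r3 where r3: "strict_mono r3" "((X \<circ> r2) \<circ> r3) \<longlonglongrightarrow> l'"
      using bounded_imp_convergent_subsequence by blast
    have sm: "strict_mono (r2 \<circ> r3)" using r2(1) r3(1) by (simp add: strict_mono_o)
    have "l' = l" using uq[OF sm r(1) _ r(2)] r3(2) by (simp add: o_assoc)
    moreover have "dist l' l \<ge> e"
    proof (rule tendsto_le[of sequentially])
      show "((\<lambda>n. dist (((X \<circ> r2) \<circ> r3) n) l) \<longlonglongrightarrow> dist l' l)"
        using r3(2) by (intro tendsto_intros)
      show "(\<lambda>n. e) \<longlonglongrightarrow> e" by simp
      show "\<forall>\<^sub>F n in sequentially. e \<le> dist (((X \<circ> r2) \<circ> r3) n) l"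
        using r2(2) by (simp add: not_less)
    qed simp
    ultimately show False using e(1) by simp
  qed
  then show ?thesis by (auto simp: convergent_def)
qed

definition mm :: "('s \<Rightarrow> 's::finite \<Rightarrow> real) \<Rightarrow> ('s \<Rightarrow> 's \<Rightarrow> real) \<Rightarrow> 's \<Rightarrow> 's \<Rightarrow> real" where
  "mm X Y s y = (\<Sum>z\<in>UNIV. X s z * Y z y)"

lemma mm_assoc: "mm (mm X Y) Z = mm X (mm Y Z)"
  by (auto simp: mm_def fun_eq_iff sum_distrib_left sum_distrib_right mult.assoc intro: sum.swap)

context
  fixes p :: "'s::finite \<Rightarrow> 'a \<Rightarrow> 's \<Rightarrow> real" and pol :: "'s \<Rightarrow> 'a"
  assumes nonneg: "\<And>x a y. 0 \<le> p x a y" and rows: "\<And>x a. sum (p x a) UNIV = 1"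
begin

definition "Pm s y = p s (pol s) y"
definition "Pw i s y = state_dist p pol s i y"
definition "Am n s y = (\<Sum>i<n. Pw i s y) / real n"

lemma Pw0: "Pw 0 s y = (if y = s then 1 else 0)" by (simp add: Pw_def)

lemma Pw_fwd: "Pw (Suc i) = mm (Pw i) Pm"
  by (simp add: Pw_def Pm_def mm_def fun_eq_iff)

lemma mm_id_right: "mm X (Pw 0) = X"
  by (simp add: mm_def Pw0 fun_eq_iff if_distrib cong: if_cong)

lemma mm_id_left: "mm (Pw 0) X = X"
proof -
  have "(\<Sum>z\<in>UNIV. (if z = s then 1 else 0) * X z y) = X s y" for s y
    by (simp add: if_distrib[of "\<lambda>u. u * _"] cong: if_cong)
  then show ?thesis unfolding mm_def Pw0 fun_eq_iff by (metis (no_types, lifting) sum.cong)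
qed

lemma Pw_bwd: "Pw (Suc i) = mm Pm (Pw i)"
proof (induction i)
  case 0
  then show ?case using mm_id_left mm_id_right by (simp add: Pw_fwd)
next
  case (Suc i)
  have "Pw (Suc (Suc i)) = mm (mm Pm (Pw i)) Pm" using Suc by (simp add: Pw_fwd)
  also have "\<dots> = mm Pm (Pw (Suc i))" by (simp add: mm_assoc Pw_fwd)
  finally show ?case .
qed

lemma Pw_nonneg: "0 \<le> Pw i s y"
  by (induction i arbitrary: y) (auto simp: Pw_def nonneg intro!: sum_nonneg)

lemma Pw_rows: "sum (Pw i s) UNIV = 1"
proof (induction i)
  case 0
  then show ?case by (simp add: Pw0)
next
  case (Suc i)
  have "sum (Pw (Suc i) s) UNIV = (\<Sum>z\<in>UNIV. Pw i s z * (\<Sum>y\<in>UNIV. Pm z y))"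
    by (simp add: Pw_fwd mm_def sum_distrib_left) (rule sum.swap)
  also have "\<dots> = 1" using Suc by (simp add: Pm_def rows)
  finally show ?case .
qed

lemma Pw_le1: "Pw i s y \<le> 1"
proof -
  have "Pw i s y \<le> sum (Pw i s) UNIV"
    by (rule member_le_sum) (auto simp: Pw_nonneg)
  then show ?thesis by (simp add: Pw_rows)
qed

lemma Am_bounds: "0 \<le> Am n s y" "Am n s y \<le> 1"
proof -
  show "0 \<le> Am n s y" by (simp add: Am_def Pw_nonneg sum_nonneg)
  have "(\<Sum>i<n. Pw i s y) \<le> (\<Sum>i<n. 1)" by (rule sum_mono) (simp add: Pw_le1)
  then show "Am n s y \<le> 1" by (cases "n = 0") (auto simp: Am_def field_simps)
qed

lemma Am_P: "mm (Am n) Pm s y = Am n s y + (Pw n s y - Pw 0 s y) / real n"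
proof -
  have "mm (Am n) Pm s y = (\<Sum>i<n. Pw (Suc i) s y) / real n"
    by (simp add: Am_def mm_def Pw_fwd sum_divide_distrib sum_distrib_right) (rule sum.swap)
  also have "(\<Sum>i<n. Pw (Suc i) s y) = (\<Sum>i<n. Pw i s y) + (Pw n s y - Pw 0 s y)"
    by (induction n) auto
  finally have "mm (Am n) Pm s y = ((\<Sum>i<n. Pw i s y) + (Pw n s y - Pw 0 s y)) / real n" by simp
  then show ?thesis by (simp add: Am_def add_divide_distrib)
qed

lemma P_Am: "mm Pm (Am n) s y = Am n s y + (Pw n s y - Pw 0 s y) / real n"
proof -
  have "mm Pm (Am n) s y = (\<Sum>i<n. Pw (Suc i) s y) / real n"
    by (simp add: Am_def mm_def Pw_bwd sum_divide_distrib sum_distrib_left) (rule sum.swap)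
  also have "(\<Sum>i<n. Pw (Suc i) s y) = (\<Sum>i<n. Pw i s y) + (Pw n s y - Pw 0 s y)"
    by (induction n) auto
  finally have "mm Pm (Am n) s y = ((\<Sum>i<n. Pw i s y) + (Pw n s y - Pw 0 s y)) / real n" by simp
  then show ?thesis by (simp add: Am_def add_divide_distrib)
qed

lemma limpt:
  assumes r: "strict_mono r" and L: "\<And>s y. (\<lambda>k. Am (r k) s y) \<longlonglongrightarrow> L s y"
  shows "mm L Pm = L" "mm Pm L = L"
proof -
  have z: "(\<lambda>k. (Pw (r k) s y - Pw 0 s y) / real (r k)) \<longlonglongrightarrow> 0" for s y
  proof (rule tendsto_0_le[where K=1])
    show "(\<lambda>k. 1 / real (r k)) \<longlonglongrightarrow> 0"
      using LIMSEQ_subseq_LIMSEQ[OF lim_inverse_n' r] by (simp add: o_def)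
    have "norm ((Pw (r k) s y - Pw 0 s y) / real (r k)) \<le> norm (1 / real (r k)) * 1" for k
    proof -
      have "\<bar>Pw (r k) s y - Pw 0 s y\<bar> \<le> 1"
        using Pw_nonneg[of "r k" s y] Pw_le1[of "r k" s y] Pw_nonneg[of 0 s y] Pw_le1[of 0 s y] by linarith
      then show ?thesis by (simp add: divide_le_cancel abs_divide)
    qed
    then show "\<forall>\<^sub>F k in sequentially. norm ((Pw (r k) s y - Pw 0 s y) / real (r k)) \<le> norm (1 / real (r k)) * 1"
      by simp
  qed
  show "mm L Pm = L"
  proof (intro ext)
    fix s y
    have "(\<lambda>k. mm (Am (r k)) Pm s y) \<longlonglongrightarrow> mm L Pm s y"
      unfolding mm_def by (intro tendsto_intros L)
    moreover have "(\<lambda>k. mm (Am (r k)) Pm s y) \<longlonglongrightarrow> L s y + 0"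
      unfolding Am_P by (intro tendsto_intros L z)
    ultimately show "mm L Pm s y = L s y" using LIMSEQ_unique by fastforce
  qed
  show "mm Pm L = L"
  proof (intro ext)
    fix s y
    have "(\<lambda>k. mm Pm (Am (r k)) s y) \<longlonglongrightarrow> mm Pm L s y"
      unfolding mm_def by (intro tendsto_intros L)
    moreover have "(\<lambda>k. mm Pm (Am (r k)) s y) \<longlonglongrightarrow> L s y + 0"
      unfolding P_Am by (intro tendsto_intros L z)
    ultimately show "mm Pm L s y = L s y" using LIMSEQ_unique by fastforce
  qed
qed

lemma L_Pw: "mm L Pm = L \<Longrightarrow> mm L (Pw i) = L"
  by (induction i) (simp_all add: mm_id_right Pw_fwd flip: mm_assoc)

lemma Pw_L: "mm Pm L = L \<Longrightarrow> mm (Pw i) L = L"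
  by (induction i) (simp_all add: mm_id_left Pw_bwd mm_assoc)

lemma L_Am: assumes "mm L Pm = L" "n \<ge> 1" shows "mm L (Am n) s y = L s y"
proof -
  have "mm L (Am n) s y = (\<Sum>i<n. mm L (Pw i) s y) / real n"
    by (simp add: mm_def Am_def sum_divide_distrib sum_distrib_left) (rule sum.swap)
  also have "\<dots> = L s y" using L_Pw[OF assms(1)] assms(2) by simp
  finally show ?thesis .
qed

lemma Am_L: assumes "mm Pm L = L" "n \<ge> 1" shows "mm (Am n) L s y = L s y"
proof -
  have "mm (Am n) L s y = (\<Sum>i<n. mm (Pw i) L s y) / real n"
    by (simp add: mm_def Am_def sum_divide_distrib sum_distrib_right) (rule sum.swap)
  also have "\<dots> = L s y" using Pw_L[OF assms(1)] assms(2) by simp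
  finally show ?thesis .
qed

lemma limpt_unique:
  assumes r1: "strict_mono r1" and L1: "\<And>s y. (\<lambda>k. Am (r1 k) s y) \<longlonglongrightarrow> L1 s y"
    and r2: "strict_mono r2" and L2: "\<And>s y. (\<lambda>k. Am (r2 k) s y) \<longlonglongrightarrow> L2 s y"
  shows "L1 = L2"
proof (intro ext)
  fix s y
  note a = limpt[OF r1 L1] and b = limpt[OF r2 L2]
  have ev: "\<forall>\<^sub>F k in sequentially. r k \<ge> 1" if "strict_mono r" for r :: "nat \<Rightarrow> nat"
    unfolding eventually_sequentially
    using seq_suble[OF that] by (metis le_trans)
  have "(\<lambda>k. mm L1 (Am (r2 k)) s y) \<longlonglongrightarrow> mm L1 L2 s y"
    unfolding mm_def by (intro tendsto_intros L2)
  moreover have "\<forall>\<^sub>F k in sequentially. L1 s y = mm L1 (Am (r2 k)) s y"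
    using ev[OF r2] by eventually_elim (use L_Am[OF a(1)] in auto)
  then have "(\<lambda>k. mm L1 (Am (r2 k)) s y) \<longlonglongrightarrow> L1 s y"
    by (rule Lim_transform_eventually[OF tendsto_const])
  ultimately have 1: "L1 s y = mm L1 L2 s y"
    using LIMSEQ_unique by blast
  have "(\<lambda>k. mm (Am (r1 k)) L2 s y) \<longlonglongrightarrow> mm L1 L2 s y"
    unfolding mm_def by (intro tendsto_intros L1)
  moreover have "\<forall>\<^sub>F k in sequentially. L2 s y = mm (Am (r1 k)) L2 s y"
    using ev[OF r1] by eventually_elim (use Am_L[OF b(2)] in auto)
  then have "(\<lambda>k. mm (Am (r1 k)) L2 s y) \<longlonglongrightarrow> L2 s y"
    by (rule Lim_transform_eventually[OF tendsto_const])
  ultimately have 2: "L2 s y = mm L1 L2 s y"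
    using LIMSEQ_unique by blast
  show "L1 s y = L2 s y" using 1 2 by simp
qed

lemma Am_conv: "convergent (\<lambda>n. Am n s y)"
proof -
  define X :: "nat \<Rightarrow> real ^ ('s \<times> 's)" where "X n = (\<chi> i. Am n (fst i) (snd i))" for n
  have "bounded (range X)"
  proof -
    have "norm (X n) \<le> real CARD('s \<times> 's)" for n
    proof -
      have "norm (X n) \<le> (\<Sum>i\<in>UNIV. \<bar>X n $ i\<bar>)" by (rule norm_le_l1_cart)
      also have "\<dots> \<le> (\<Sum>i\<in>(UNIV::('s\<times>'s) set). 1)"
        by (rule sum_mono) (use Am_bounds in \<open>auto simp: X_def\<close>)
      finally show ?thesis by simp
    qed
    then show ?thesis unfolding bounded_iff by blast
  qed
  moreover have "l1 = l2" if "strict_mono r1" "strict_mono r2" "(X \<circ> r1) \<longlonglongrightarrow> l1" "(X \<circ> r2) \<longlonglongrightarrow> l2"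
    for r1 r2 l1 l2
  proof -
    have t: "(\<lambda>k. Am (r k) s y) \<longlonglongrightarrow> l $ (s, y)" if "(X \<circ> r) \<longlonglongrightarrow> l" for r l s y
      using tendsto_vec_nth[OF that, of "(s,y)"] by (simp add: X_def o_def)
    have "(\<lambda>s y. l1 $ (s, y)) = (\<lambda>s y. l2 $ (s, y))"
      by (rule limpt_unique[OF that(1) t[OF that(3)] that(2) t[OF that(4)]])
    then show ?thesis by (simp add: vec_eq_iff fun_eq_iff)
  qed
  ultimately have "convergent X" by (rule subseq_unique_conv)
  then obtain l where "X \<longlonglongrightarrow> l" by (auto simp: convergent_def)
  from tendsto_vec_nth[OF this, of "(s,y)"] show ?thesis by (auto simp: X_def convergent_def)
qed

lemma cesaro_conv: "convergent (\<lambda>n. (\<Sum>i<n. \<Sum>x\<in>UNIV. state_dist p pol s i x * f x) / real n)"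
proof -
  have "(\<lambda>n. (\<Sum>i<n. \<Sum>x\<in>UNIV. state_dist p pol s i x * f x) / real n) = (\<lambda>n. \<Sum>x\<in>UNIV. Am n s x * f x)"
    by (auto simp: fun_eq_iff Am_def Pw_def sum_divide_distrib sum_distrib_right intro: sum.swap)
  moreover have "convergent (\<lambda>n. \<Sum>x\<in>UNIV. Am n s x * f x)"
    by (intro convergent_sum convergent_mult Am_conv convergent_const)
  ultimately show ?thesis by simp
qed

lemma dist_h_bounds: "Min (range h) \<le> (\<Sum>x\<in>UNIV. Pw i s x * h x)" "(\<Sum>x\<in>UNIV. Pw i s x * h x) \<le> Max (range h)"
proof -
  have "(\<Sum>x\<in>UNIV. Pw i s x * Min (range h)) \<le> (\<Sum>x\<in>UNIV. Pw i s x * h x)"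
    by (rule sum_mono) (auto intro!: mult_left_mono Pw_nonneg)
  then show "Min (range h) \<le> (\<Sum>x\<in>UNIV. Pw i s x * h x)"
    by (simp add: sum_distrib_right[symmetric] Pw_rows)
  have "(\<Sum>x\<in>UNIV. Pw i s x * h x) \<le> (\<Sum>x\<in>UNIV. Pw i s x * Max (range h))"
    by (rule sum_mono) (auto intro!: mult_left_mono Pw_nonneg)
  then show "(\<Sum>x\<in>UNIV. Pw i s x * h x) \<le> Max (range h)"
    by (simp add: sum_distrib_right[symmetric] Pw_rows)
qed

lemma step_eq: "(\<Sum>x\<in>UNIV. Pw i s x * (\<Sum>y\<in>UNIV. p x (pol x) y * h y)) = (\<Sum>y\<in>UNIV. Pw (Suc i) s y * h y)"
  by (simp add: Pw_fwd mm_def Pm_def sum_distrib_left sum_distrib_right mult.assoc) (rule sum.swap)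

lemma tele_upper:
  assumes H: "\<And>s. r s (pol s) + (\<Sum>y\<in>UNIV. p s (pol s) y * h y) \<le> h s + G"
  shows "(\<Sum>i<n. \<Sum>x\<in>UNIV. state_dist p pol z i x * r x (pol x)) \<le> real n * G + (Max (range h) - Min (range h))"
proof -
  define a where "a i = (\<Sum>x\<in>UNIV. Pw i z x * h x)" for i
  have "(\<Sum>x\<in>UNIV. state_dist p pol z i x * r x (pol x)) \<le> a i - a (Suc i) + G" for i
  proof -
    have "(\<Sum>x\<in>UNIV. state_dist p pol z i x * r x (pol x))
        \<le> (\<Sum>x\<in>UNIV. Pw i z x * (h x + G - (\<Sum>y\<in>UNIV. p x (pol x) y * h y)))"
      unfolding Pw_def[symmetric]
      by (rule sum_mono, rule mult_left_mono) (use H Pw_nonneg in \<open>auto simp: algebra_simps\<close>)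
    also have "\<dots> = a i + G - a (Suc i)"
    proof -
      have "(\<Sum>x\<in>UNIV. Pw i z x * (h x + G - (\<Sum>y\<in>UNIV. p x (pol x) y * h y)))
          = (\<Sum>x\<in>UNIV. Pw i z x * h x) + (\<Sum>x\<in>UNIV. Pw i z x) * G - (\<Sum>x\<in>UNIV. Pw i z x * (\<Sum>y\<in>UNIV. p x (pol x) y * h y))"
        by (simp add: right_diff_distrib distrib_left sum.distrib sum_subtractf sum_distrib_right)
      then show ?thesis by (simp add: a_def step_eq Pw_rows)
    qed
    finally show ?thesis by simp
  qed
  then have "(\<Sum>i<n. \<Sum>x\<in>UNIV. state_dist p pol z i x * r x (pol x)) \<le> (\<Sum>i<n. a i - a (Suc i) + G)"
    by (rule sum_mono)
  also have "\<dots> = a 0 - a n + real n * G"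
    by (simp add: sum.distrib sum_lessThan_telescope')
  also have "\<dots> \<le> real n * G + (Max (range h) - Min (range h))"
    using dist_h_bounds[where h=h and i=0 and s=z] dist_h_bounds[where h=h and i=n and s=z] unfolding a_def by linarith
  finally show ?thesis .
qed

lemma tele_lower:
  assumes H: "\<And>s. r s (pol s) + (\<Sum>y\<in>UNIV. p s (pol s) y * h y) \<ge> h s + G"
  shows "(\<Sum>i<n. \<Sum>x\<in>UNIV. state_dist p pol z i x * r x (pol x)) \<ge> real n * G - (Max (range h) - Min (range h))"
proof -
  define a where "a i = (\<Sum>x\<in>UNIV. Pw i z x * h x)" for i
  have "(\<Sum>x\<in>UNIV. state_dist p pol z i x * r x (pol x)) \<ge> a i - a (Suc i) + G" for i
  proof -
    have "(\<Sum>x\<in>UNIV. state_dist p pol z i x * r x (pol x))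
        \<ge> (\<Sum>x\<in>UNIV. Pw i z x * (h x + G - (\<Sum>y\<in>UNIV. p x (pol x) y * h y)))"
      unfolding Pw_def[symmetric]
      by (rule sum_mono, rule mult_left_mono) (use H Pw_nonneg in \<open>auto simp: algebra_simps\<close>)
    moreover have "(\<Sum>x\<in>UNIV. Pw i z x * (h x + G - (\<Sum>y\<in>UNIV. p x (pol x) y * h y))) = a i + G - a (Suc i)"
    proof -
      have "(\<Sum>x\<in>UNIV. Pw i z x * (h x + G - (\<Sum>y\<in>UNIV. p x (pol x) y * h y)))
          = (\<Sum>x\<in>UNIV. Pw i z x * h x) + (\<Sum>x\<in>UNIV. Pw i z x) * G - (\<Sum>x\<in>UNIV. Pw i z x * (\<Sum>y\<in>UNIV. p x (pol x) y * h y))"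
        by (simp add: right_diff_distrib distrib_left sum.distrib sum_subtractf sum_distrib_right)
      then show ?thesis by (simp add: a_def step_eq Pw_rows)
    qed
    ultimately show ?thesis by simp
  qed
  then have "(\<Sum>i<n. \<Sum>x\<in>UNIV. state_dist p pol z i x * r x (pol x)) \<ge> (\<Sum>i<n. a i - a (Suc i) + G)"
    by (rule sum_mono)
  moreover have "(\<Sum>i<n. a i - a (Suc i) + G) = a 0 - a n + real n * G"
    by (simp add: sum.distrib sum_lessThan_telescope')
  moreover have "a 0 - a n + real n * G \<ge> real n * G - (Max (range h) - Min (range h))"
    using dist_h_bounds[where h=h and i=0 and s=z] dist_h_bounds[where h=h and i=n and s=z] unfolding a_def by linarith
  ultimately show ?thesis by linarith
qed

lemma avg_conv: "(\<lambda>n. (\<Sum>i<n. \<Sum>x\<in>UNIV. state_dist p pol s1 i x * r x (pol x)) / real n) \<longlonglongrightarrow> avg_reward r p s1 pol"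
  unfolding avg_reward_def using cesaro_conv by (simp add: convergent_LIMSEQ_iff)

lemma avg_upper:
  assumes H: "\<And>s. r s (pol s) + (\<Sum>y\<in>UNIV. p s (pol s) y * h y) \<le> h s + G"
  shows "avg_reward r p s1 pol \<le> G"
proof (rule tendsto_le[OF _ _ avg_conv])
  define c where "c = Max (range h) - Min (range h)"
  show "(\<lambda>n. G + c * (1 / real n)) \<longlonglongrightarrow> G"
    using tendsto_add[OF tendsto_const tendsto_mult[OF tendsto_const lim_inverse_n'], of G c] by simp
  show "\<forall>\<^sub>F n in sequentially. (\<Sum>i<n. \<Sum>x\<in>UNIV. state_dist p pol s1 i x * r x (pol x)) / real n \<le> G + c * (1 / real n)"
    unfolding eventually_sequentially
  proof (intro exI[of _ 1] allI impI)
    fix n :: nat assume "1 \<le> n"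
    then have "0 < real n" by simp
    have "(\<Sum>i<n. \<Sum>x\<in>UNIV. state_dist p pol s1 i x * r x (pol x)) / real n \<le> (real n * G + c) / real n"
      using tele_upper[where r=r and h=h and G=G and n=n and z=s1, OF H] \<open>0 < real n\<close>
      by (intro divide_right_mono) (auto simp: c_def)
    also have "\<dots> = G + c * (1 / real n)" using \<open>0 < real n\<close> by (simp add: field_simps)
    finally show "(\<Sum>i<n. \<Sum>x\<in>UNIV. state_dist p pol s1 i x * r x (pol x)) / real n \<le> G + c * (1 / real n)" .
  qed
qed simp

lemma avg_lower:
  assumes H: "\<And>s. r s (pol s) + (\<Sum>y\<in>UNIV. p s (pol s) y * h y) \<ge> h s + G"
  shows "avg_reward r p s1 pol \<ge> G"
proof (rule tendsto_le[OF _ avg_conv])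
  define c where "c = Max (range h) - Min (range h)"
  show "(\<lambda>n. G - c * (1 / real n)) \<longlonglongrightarrow> G"
    using tendsto_diff[OF tendsto_const tendsto_mult[OF tendsto_const lim_inverse_n'], of G c] by simp
  show "\<forall>\<^sub>F n in sequentially. (\<Sum>i<n. \<Sum>x\<in>UNIV. state_dist p pol s1 i x * r x (pol x)) / real n \<ge> G - c * (1 / real n)"
    unfolding eventually_sequentially
  proof (intro exI[of _ 1] allI impI)
    fix n :: nat assume "1 \<le> n"
    then have "0 < real n" by simp
    have "(\<Sum>i<n. \<Sum>x\<in>UNIV. state_dist p pol s1 i x * r x (pol x)) / real n \<ge> (real n * G - c) / real n"
      using tele_lower[where r=r and h=h and G=G and n=n and z=s1, OF H] \<open>0 < real n\<close>
      by (intro divide_right_mono) (auto simp: c_def)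
    moreover have "(real n * G - c) / real n = G - c * (1 / real n)" using \<open>0 < real n\<close> by (simp add: field_simps)
    ultimately show "(\<Sum>i<n. \<Sum>x\<in>UNIV. state_dist p pol s1 i x * r x (pol x)) / real n \<ge> G - c * (1 / real n)" by simp
  qed
qed simp

end


definition Eset :: "('s::finite \<Rightarrow> 'a \<Rightarrow> (real \<times> ('s \<Rightarrow> real)) set) \<Rightarrow> real \<Rightarrow> ('s \<Rightarrow> real) \<Rightarrow> 's \<Rightarrow> real set" where
  "Eset C \<beta> V s = (\<Union>a. (\<lambda>(x,q). x + \<beta> * (\<Sum>y\<in>UNIV. q y * V y)) ` C s a)"

definition Top :: "('s::finite \<Rightarrow> 'a \<Rightarrow> (real \<times> ('s \<Rightarrow> real)) set) \<Rightarrow> real \<Rightarrow> ('s \<Rightarrow> real) \<Rightarrow> 's \<Rightarrow> real" where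
  "Top C \<beta> V s = Sup (Eset C \<beta> V s)"

fun viter :: "('s::finite \<Rightarrow> 'a \<Rightarrow> (real \<times> ('s \<Rightarrow> real)) set) \<Rightarrow> real \<Rightarrow> nat \<Rightarrow> 's \<Rightarrow> real" where
  "viter C \<beta> 0 = (\<lambda>_. 0)"
| "viter C \<beta> (Suc n) = Top C \<beta> (viter C \<beta> n)"

context
  fixes C :: "'s::finite \<Rightarrow> 'a \<Rightarrow> (real \<times> ('s \<Rightarrow> real)) set" and \<beta> :: real
  assumes valid: "\<And>s a x q. (x,q) \<in> C s a \<Longrightarrow> 0 \<le> x \<and> x \<le> 1 \<and> (\<forall>y. 0 \<le> q y) \<and> sum q UNIV = 1"
    and ne: "\<And>s a. C s a \<noteq> {}"
    and beta: "0 < \<beta>" "\<beta> < 1"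
begin

lemma q_le1: assumes "(x,q) \<in> C s a" shows "q y \<le> 1"
proof -
  have "q y \<le> sum q UNIV" by (rule member_le_sum) (use valid[OF assms] in auto)
  then show ?thesis using valid[OF assms] by simp
qed

lemma qV_le: assumes "(x,q) \<in> C s a" shows "(\<Sum>y\<in>UNIV. q y * V y) \<le> (\<Sum>y\<in>UNIV. \<bar>V y\<bar>)"
proof (rule sum_mono)
  fix y
  have "q y * V y \<le> q y * \<bar>V y\<bar>" using valid[OF assms] by (intro mult_left_mono) auto
  also have "\<dots> \<le> 1 * \<bar>V y\<bar>" using q_le1[OF assms] by (intro mult_right_mono) auto
  finally show "q y * V y \<le> \<bar>V y\<bar>" by simp
qed

lemma Eset_ne: "Eset C \<beta> V s \<noteq> {}"
  using ne[of s undefined] unfolding Eset_def by auto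

lemma Eset_bdd: "bdd_above (Eset C \<beta> V s)"
proof (rule bdd_aboveI)
  fix e assume "e \<in> Eset C \<beta> V s"
  then obtain a x q where xq: "(x,q) \<in> C s a" "e = x + \<beta> * (\<Sum>y\<in>UNIV. q y * V y)"
    unfolding Eset_def by auto
  have "\<beta> * (\<Sum>y\<in>UNIV. q y * V y) \<le> \<beta> * (\<Sum>y\<in>UNIV. \<bar>V y\<bar>)"
    using qV_le[OF xq(1)] beta by (intro mult_left_mono) auto
  then show "e \<le> 1 + \<beta> * (\<Sum>y\<in>UNIV. \<bar>V y\<bar>)" using valid[OF xq(1)] xq(2) by linarith
qed

lemma elem_le: "(x,q) \<in> C s a \<Longrightarrow> x + \<beta> * (\<Sum>y\<in>UNIV. q y * V y) \<le> Top C \<beta> V s"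
  unfolding Top_def by (rule cSup_upper[OF _ Eset_bdd]) (auto simp: Eset_def)

lemma Top_le: "(\<And>a x q. (x,q) \<in> C s a \<Longrightarrow> x + \<beta> * (\<Sum>y\<in>UNIV. q y * V y) \<le> B) \<Longrightarrow> Top C \<beta> V s \<le> B"
  unfolding Top_def by (rule cSup_least[OF Eset_ne]) (auto simp: Eset_def)

lemma Top_approx: assumes "e > 0"
  shows "\<exists>a x q. (x,q) \<in> C s a \<and> Top C \<beta> V s - e < x + \<beta> * (\<Sum>y\<in>UNIV. q y * V y)"
proof -
  have "Top C \<beta> V s - e < Sup (Eset C \<beta> V s)" using assms by (simp add: Top_def)
  then obtain v where "v \<in> Eset C \<beta> V s" "Top C \<beta> V s - e < v"
    using less_cSup_iff[OF Eset_ne Eset_bdd] by blast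
  then show ?thesis unfolding Eset_def by auto
qed

lemma Top_nonexp: "Top C \<beta> V s \<le> Top C \<beta> W s + \<beta> * (\<Sum>y\<in>UNIV. \<bar>V y - W y\<bar>)"
proof (rule Top_le)
  fix a x q assume xq: "(x,q) \<in> C s a"
  have "(\<Sum>y\<in>UNIV. q y * V y) = (\<Sum>y\<in>UNIV. q y * W y) + (\<Sum>y\<in>UNIV. q y * (V y - W y))"
    by (simp add: algebra_simps sum.distrib sum_subtractf)
  also have "\<dots> \<le> (\<Sum>y\<in>UNIV. q y * W y) + (\<Sum>y\<in>UNIV. \<bar>V y - W y\<bar>)"
    using qV_le[OF xq, of "\<lambda>y. V y - W y"] by simp
  finally have "\<beta> * (\<Sum>y\<in>UNIV. q y * V y) \<le> \<beta> * (\<Sum>y\<in>UNIV. q y * W y) + \<beta> * (\<Sum>y\<in>UNIV. \<bar>V y - W y\<bar>)"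
    using beta by (simp add: distrib_left[symmetric])
  with elem_le[OF xq, of W] show "x + \<beta> * (\<Sum>y\<in>UNIV. q y * V y) \<le> Top C \<beta> W s + \<beta> * (\<Sum>y\<in>UNIV. \<bar>V y - W y\<bar>)"
    by linarith
qed

lemma Top_mono: assumes "\<And>y. V y \<le> W y" shows "Top C \<beta> V s \<le> Top C \<beta> W s"
proof (rule Top_le)
  fix a x q assume xq: "(x,q) \<in> C s a"
  have "(\<Sum>y\<in>UNIV. q y * V y) \<le> (\<Sum>y\<in>UNIV. q y * W y)"
    using valid[OF xq] assms by (intro sum_mono mult_left_mono) auto
  then have "x + \<beta> * (\<Sum>y\<in>UNIV. q y * V y) \<le> x + \<beta> * (\<Sum>y\<in>UNIV. q y * W y)"
    using beta by simp
  also have "\<dots> \<le> Top C \<beta> W s" by (rule elem_le[OF xq])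
  finally show "x + \<beta> * (\<Sum>y\<in>UNIV. q y * V y) \<le> Top C \<beta> W s" .
qed

lemma Top_nonneg: assumes "\<And>y. 0 \<le> V y" shows "0 \<le> Top C \<beta> V s"
proof -
  obtain x q where xq: "(x,q) \<in> C s undefined" using ne by fast
  have "0 \<le> (\<Sum>y\<in>UNIV. q y * V y)"
    using valid[OF xq] assms by (intro sum_nonneg mult_nonneg_nonneg) auto
  then have "0 \<le> x + \<beta> * (\<Sum>y\<in>UNIV. q y * V y)"
    using valid[OF xq] beta by simp
  also have "\<dots> \<le> Top C \<beta> V s" by (rule elem_le[OF xq])
  finally show ?thesis .
qed

lemma Top_le_B: assumes "\<And>y. 0 \<le> V y" "\<And>y. V y \<le> 1 / (1 - \<beta>)" shows "Top C \<beta> V s \<le> 1 / (1 - \<beta>)"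
proof (rule Top_le)
  fix a x q assume xq: "(x,q) \<in> C s a"
  have "(\<Sum>y\<in>UNIV. q y * V y) \<le> (\<Sum>y\<in>UNIV. q y * (1 / (1 - \<beta>)))"
    using valid[OF xq] assms by (intro sum_mono mult_left_mono) auto
  also have "\<dots> = 1 / (1 - \<beta>)" using valid[OF xq] by (simp add: sum_divide_distrib[symmetric])
  finally have "x + \<beta> * (\<Sum>y\<in>UNIV. q y * V y) \<le> 1 + \<beta> * (1 / (1 - \<beta>))"
    using valid[OF xq] beta by (smt (verit) mult_left_mono)
  also have "\<dots> = 1 / (1 - \<beta>)" using beta by (simp add: field_simps)
  finally show "x + \<beta> * (\<Sum>y\<in>UNIV. q y * V y) \<le> 1 / (1 - \<beta>)" .
qed

lemma viter_bounds: "0 \<le> viter C \<beta> n s \<and> viter C \<beta> n s \<le> 1 / (1 - \<beta>)"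
proof (induction n arbitrary: s)
  case 0 then show ?case using beta by simp
next
  case (Suc n) then show ?case using Top_nonneg Top_le_B by simp
qed

lemma viter_mono: "viter C \<beta> n s \<le> viter C \<beta> (Suc n) s"
proof (induction n arbitrary: s)
  case 0 then show ?case using Top_nonneg by simp
next
  case (Suc n) then show ?case using Top_mono by simp
qed

lemma disc_fix: "\<exists>V. (\<forall>s. 0 \<le> V s \<and> V s \<le> 1 / (1 - \<beta>)) \<and> (\<forall>s. Top C \<beta> V s = V s)"
proof -
  define V where "V s = (SUP n. viter C \<beta> n s)" for s
  have lim: "(\<lambda>n. viter C \<beta> n s) \<longlonglongrightarrow> V s" for s
    unfolding V_def
    by (rule LIMSEQ_incseq_SUP) (use viter_bounds viter_mono in \<open>auto intro!: bdd_aboveI incseq_SucI\<close>)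
  have bV: "0 \<le> V s \<and> V s \<le> 1 / (1 - \<beta>)" for s
  proof -
    have "0 \<le> V s" by (rule LIMSEQ_le_const[OF lim]) (use viter_bounds in auto)
    moreover have "V s \<le> 1 / (1 - \<beta>)" by (rule LIMSEQ_le_const2[OF lim]) (use viter_bounds in auto)
    ultimately show ?thesis by simp
  qed
  have "Top C \<beta> V s = V s" for s
  proof -
    have z: "(\<lambda>n. \<beta> * (\<Sum>y\<in>UNIV. \<bar>V y - viter C \<beta> n y\<bar>)) \<longlonglongrightarrow> \<beta> * (\<Sum>y\<in>UNIV. \<bar>V y - V y\<bar>)"
      by (intro tendsto_intros lim)
    have "(\<lambda>n. viter C \<beta> (Suc n) s - Top C \<beta> V s) \<longlonglongrightarrow> 0"
    proof (rule tendsto_0_le[where K=1, OF z[simplified]])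
      show "\<forall>\<^sub>F n in sequentially. norm (viter C \<beta> (Suc n) s - Top C \<beta> V s)
             \<le> norm (\<beta> * (\<Sum>y\<in>UNIV. \<bar>V y - viter C \<beta> n y\<bar>)) * 1"
      proof (intro always_eventually allI)
        fix n
        have "Top C \<beta> V s \<le> Top C \<beta> (viter C \<beta> n) s + \<beta> * (\<Sum>y\<in>UNIV. \<bar>V y - viter C \<beta> n y\<bar>)"
          by (rule Top_nonexp)
        moreover have "Top C \<beta> (viter C \<beta> n) s \<le> Top C \<beta> V s + \<beta> * (\<Sum>y\<in>UNIV. \<bar>viter C \<beta> n y - V y\<bar>)"
          by (rule Top_nonexp)
        moreover have "(\<Sum>y\<in>UNIV. \<bar>viter C \<beta> n y - V y\<bar>) = (\<Sum>y\<in>UNIV. \<bar>V y - viter C \<beta> n y\<bar>)"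
          by (simp add: abs_minus_commute)
        moreover have "0 \<le> \<beta> * (\<Sum>y\<in>UNIV. \<bar>V y - viter C \<beta> n y\<bar>)"
          using beta by (auto intro!: sum_nonneg)
        ultimately show "norm (viter C \<beta> (Suc n) s - Top C \<beta> V s)
             \<le> norm (\<beta> * (\<Sum>y\<in>UNIV. \<bar>V y - viter C \<beta> n y\<bar>)) * 1"
          by auto
      qed
    qed
    from tendsto_add[OF this tendsto_const[of "Top C \<beta> V s"]]
    have "(\<lambda>n. viter C \<beta> (Suc n) s) \<longlonglongrightarrow> Top C \<beta> V s" by simp
    moreover have "(\<lambda>n. viter C \<beta> (Suc n) s) \<longlonglongrightarrow> V s" using lim by (rule LIMSEQ_Suc)
    ultimately show ?thesis using LIMSEQ_unique by blast
  qed
  with bV show ?thesis by blast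
qed

end


definition PS :: "('s::finite \<Rightarrow> 'a::finite \<Rightarrow> (real \<times> ('s \<Rightarrow> real)) set) \<Rightarrow> (('s \<Rightarrow> 'a \<Rightarrow> real) \<times> ('s \<Rightarrow> 'a \<Rightarrow> 's \<Rightarrow> real)) set" where
  "PS C = {(r', p'). \<forall>s a. (r' s a, p' s a) \<in> C s a}"

lemma not_hit_nonneg: "(\<And>x a y. 0 \<le> p x a y) \<Longrightarrow> 0 \<le> not_hit p pol s' n x"
  by (induction n arbitrary: x) (auto intro!: sum_nonneg)

lemma span_bound:
  fixes C :: "'s::finite \<Rightarrow> 'a::finite \<Rightarrow> (real \<times> ('s \<Rightarrow> real)) set"
  assumes valid: "\<And>s a x q. (x,q) \<in> C s a \<Longrightarrow> 0 \<le> x \<and> x \<le> 1 \<and> (\<forall>y. 0 \<le> q y) \<and> sum q UNIV = 1"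
    and ref: "\<And>s a. (r1 s a, p1 s a) \<in> C s a"
    and beta: "0 < \<beta>" "\<beta> < 1"
    and Vb: "\<And>s. 0 \<le> V s \<and> V s \<le> 1 / (1 - \<beta>)"
    and fixp: "\<And>s. Top C \<beta> V s = V s"
    and ss: "s \<noteq> s'"
    and pol: "(\<Sum>n. ennreal (not_hit p1 pol s' n s)) \<le> ennreal D"
  shows "V s' - D \<le> V s"
proof -
  have ne: "\<And>s a. C s a \<noteq> {}" using ref by blast
  have p1nn: "\<And>x a y. 0 \<le> p1 x a y" using valid[OF ref] by blast
  have p1sum: "\<And>x a. sum (p1 x a) UNIV = 1" using valid[OF ref] by blast
  define W where "W = V s'"
  define nh where "nh n x = not_hit p1 pol s' n x" for n x
  have nhnn: "0 \<le> nh n x" for n x unfolding nh_def by (rule not_hit_nonneg[OF p1nn])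
  have W: "0 \<le> W" "(1 - \<beta>) * W \<le> 1" using Vb[of s'] beta by (auto simp: W_def field_simps)
  have claim: "W - (\<Sum>j<n. nh j x) - nh n x * W \<le> V x" for n x
  proof (induction n arbitrary: x)
    case 0
    then show ?case using Vb[of x] by (simp add: nh_def)
  next
    case (Suc n)
    show ?case
    proof (cases "x = s'")
      case True
      have "0 \<le> (\<Sum>j<Suc n. nh j x)" by (rule sum_nonneg) (simp add: nhnn)
      moreover have "0 \<le> nh (Suc n) x * W" using nhnn W by simp
      ultimately show ?thesis using True by (simp add: W_def)
    next
      case False
      define a where "a = pol x"
      define U where "U = UNIV - {s'}"
      have nhS: "nh (Suc j) x = (\<Sum>y\<in>U. p1 x a y * nh j y)" for j
        by (simp add: nh_def a_def U_def)
      have "r1 x a + \<beta> * (\<Sum>y\<in>UNIV. p1 x a y * V y) \<le> V x"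
        using elem_le[where C=C and \<beta>=\<beta> and V=V, OF valid ne beta ref[of x a]] fixp[of x] by simp
      then have A: "\<beta> * (\<Sum>y\<in>UNIV. p1 x a y * V y) \<le> V x" using valid[OF ref, of x a] by linarith
      have split: "(\<Sum>y\<in>UNIV. p1 x a y * V y) = p1 x a s' * W + (\<Sum>y\<in>U. p1 x a y * V y)"
        unfolding U_def W_def by (simp add: sum.remove[of UNIV s'])
      have split1: "(\<Sum>y\<in>UNIV. p1 x a y) = p1 x a s' + (\<Sum>y\<in>U. p1 x a y)"
        unfolding U_def by (simp add: sum.remove[of UNIV s'])
      have "(\<Sum>y\<in>U. p1 x a y * V y) \<ge> (\<Sum>y\<in>U. p1 x a y * (W - (\<Sum>j<n. nh j y) - nh n y * W))"
        by (intro sum_mono mult_left_mono Suc.IH p1nn)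
      also have "(\<Sum>y\<in>U. p1 x a y * (W - (\<Sum>j<n. nh j y) - nh n y * W))
          = W * (\<Sum>y\<in>U. p1 x a y) - (\<Sum>j<n. nh (Suc j) x) - nh (Suc n) x * W"
        unfolding nhS
        by (simp add: right_diff_distrib sum_subtractf sum_distrib_left sum_distrib_right mult_ac)
           (rule sum.swap)
      finally have C1: "(\<Sum>y\<in>U. p1 x a y * V y) \<ge> W * (\<Sum>y\<in>U. p1 x a y) - (\<Sum>j<n. nh (Suc j) x) - nh (Suc n) x * W" .
      have su: "(\<Sum>y\<in>U. p1 x a y) = 1 - p1 x a s'" using split1 p1sum[of x a] by simp
      have su2: "W * (\<Sum>y\<in>U. p1 x a y) = W - W * p1 x a s'" unfolding su by (simp add: right_diff_distrib)
      have B: "(\<Sum>y\<in>UNIV. p1 x a y * V y) \<ge> W - (\<Sum>j<n. nh (Suc j) x) - nh (Suc n) x * W"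
        using C1 su2 split by (simp add: mult.commute)
      have S0: "0 \<le> (\<Sum>j<n. nh (Suc j) x)" by (auto intro!: sum_nonneg nhnn)
      have S1: "0 \<le> nh (Suc n) x * W" using nhnn W by simp
      have "\<beta> * (W - (\<Sum>j<n. nh (Suc j) x) - nh (Suc n) x * W) \<le> \<beta> * (\<Sum>y\<in>UNIV. p1 x a y * V y)"
        using B beta by (intro mult_left_mono) auto
      moreover have "W - 1 - (\<Sum>j<n. nh (Suc j) x) - nh (Suc n) x * W
          \<le> \<beta> * (W - (\<Sum>j<n. nh (Suc j) x) - nh (Suc n) x * W)"
      proof -
        have "\<beta> * (\<Sum>j<n. nh (Suc j) x) \<le> (\<Sum>j<n. nh (Suc j) x)" using S0 beta by (intro mult_left_le_one_le) auto
        moreover have "\<beta> * (nh (Suc n) x * W) \<le> nh (Suc n) x * W" using S1 beta by (intro mult_left_le_one_le) auto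
        ultimately show ?thesis using W beta by (simp add: algebra_simps)
      qed
      moreover have "(\<Sum>j<Suc n. nh j x) = 1 + (\<Sum>j<n. nh (Suc j) x)"
        unfolding sum.lessThan_Suc_shift by (simp add: nh_def)
      ultimately show ?thesis using A by linarith
    qed
  qed
  have E: "ennreal (\<Sum>j<n. nh j s) \<le> ennreal D" for n
  proof -
    have "ennreal (\<Sum>j<n. nh j s) = (\<Sum>j<n. ennreal (nh j s))"
      by (rule sum_ennreal[symmetric]) (simp add: nhnn)
    also have "\<dots> \<le> (\<Sum>j. ennreal (nh j s))"
      by (rule sum_le_suminf[OF summableI]) auto
    also have "\<dots> \<le> ennreal D" using pol by (simp add: nh_def)
    finally show ?thesis .
  qed
  have "nh 0 s = 1" by (simp add: nh_def)
  then have "ennreal 1 \<le> ennreal D" using E[of 1] by simp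
  then have D0: "0 \<le> D" using ennreal_le_iff2 by force
  have psum: "(\<Sum>j<n. nh j s) \<le> D" for n
    using E[of n] ennreal_le_iff[OF D0] by blast
  have "summable (\<lambda>j. nh j s)" by (rule summableI_nonneg_bounded[OF nhnn psum])
  then have z: "(\<lambda>n. nh n s) \<longlonglongrightarrow> 0" by (rule summable_LIMSEQ_zero)
  have "(\<lambda>n. W - D - nh n s * W) \<longlonglongrightarrow> W - D - 0 * W" by (intro tendsto_intros z)
  moreover have "W - D - nh n s * W \<le> V s" for n using claim[where n=n and x=s] psum[of n] by linarith
  ultimately have "W - D \<le> V s" using LIMSEQ_le_const2 by force
  then show ?thesis by (simp add: W_def)
qed



lemma PS_valid:
  assumes valid: "\<And>s a x q. (x,q) \<in> C s a \<Longrightarrow> 0 \<le> x \<and> x \<le> 1 \<and> (\<forall>y. 0 \<le> q y) \<and> sum q UNIV = 1"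
    and m: "(r', p') \<in> PS C"
  shows "\<And>x a y. 0 \<le> p' x a y" "\<And>x a. sum (p' x a) UNIV = 1" "\<And>x a. 0 \<le> r' x a" "\<And>x a. r' x a \<le> 1"
proof -
  have mm: "(r' x a, p' x a) \<in> C x a" for x a using m by (simp add: PS_def)
  show "\<And>x a y. 0 \<le> p' x a y" using valid[OF mm] by simp
  show "\<And>x a. sum (p' x a) UNIV = 1" using valid[OF mm] by simp
  show "\<And>x a. 0 \<le> r' x a" using valid[OF mm] by simp
  show "\<And>x a. r' x a \<le> 1" using valid[OF mm] by simp
qed

lemma opt_is_avg: "\<exists>pol. opt_avg_reward r p s1 = avg_reward r p s1 pol"
proof -
  have "opt_avg_reward r p s1 \<in> range (avg_reward r p s1)"
    unfolding opt_avg_reward_def by (rule Max_in) auto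
  then show ?thesis by auto
qed

lemma opt_ge_avg: "avg_reward r p s1 pol \<le> opt_avg_reward r p s1"
  unfolding opt_avg_reward_def by (rule Max_ge) auto

lemma avg_le1:
  assumes "\<And>x a y. 0 \<le> p x a y" "\<And>x a. sum (p x a) UNIV = 1" "\<And>x a. r x a \<le> 1"
  shows "avg_reward r p s1 pol \<le> 1"
  by (rule avg_upper[where p=p and pol=pol and h="\<lambda>_. 0" and G=1, OF assms(1,2)]) (simp add: assms(3))

lemma opt_le1:
  assumes "\<And>x a y. 0 \<le> p x a y" "\<And>x a. sum (p x a) UNIV = 1" "\<And>x a. r x a \<le> 1"
  shows "opt_avg_reward r p s1 \<le> 1"
proof -
  obtain pol where "opt_avg_reward r p s1 = avg_reward r p s1 pol" using opt_is_avg by blast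
  then show ?thesis using avg_le1[OF assms] by simp
qed

lemma dist_le_Max:
  assumes "\<And>y. 0 \<le> q y" "sum q UNIV = 1"
  shows "(\<Sum>y\<in>UNIV. q y * (V::'s::finite \<Rightarrow> real) y) \<le> Max (range V)"
    "Min (range V) \<le> (\<Sum>y\<in>UNIV. q y * V y)"
proof -
  have "(\<Sum>y\<in>UNIV. q y * V y) \<le> (\<Sum>y\<in>UNIV. q y * Max (range V))"
    using assms by (intro sum_mono mult_left_mono) auto
  then show "(\<Sum>y\<in>UNIV. q y * V y) \<le> Max (range V)"
    using assms by (simp add: sum_distrib_right[symmetric])
  have "(\<Sum>y\<in>UNIV. q y * Min (range V)) \<le> (\<Sum>y\<in>UNIV. q y * V y)"
    using assms by (intro sum_mono mult_left_mono) auto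
  then show "Min (range V) \<le> (\<Sum>y\<in>UNIV. q y * V y)"
    using assms by (simp add: sum_distrib_right[symmetric])
qed

lemma abstract_main:
  fixes C C0 :: "'s::finite \<Rightarrow> 'a::finite \<Rightarrow> (real \<times> ('s \<Rightarrow> real)) set"
  assumes valid: "\<And>s a x q. (x,q) \<in> C s a \<Longrightarrow> 0 \<le> x \<and> x \<le> 1 \<and> (\<forall>y. 0 \<le> q y) \<and> sum q UNIV = 1"
    and valid0: "\<And>s a x q. (x,q) \<in> C0 s a \<Longrightarrow> 0 \<le> x \<and> x \<le> 1 \<and> (\<forall>y. 0 \<le> q y) \<and> sum q UNIV = 1"
    and ref: "\<And>s a. (r1 s a, p1 s a) \<in> C s a"
    and hit: "\<And>s s'. s \<noteq> s' \<Longrightarrow> \<exists>pol. (\<Sum>n. ennreal (not_hit p1 pol s' n s)) \<le> ennreal D"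
    and proj: "\<And>s a x q h. (x,q) \<in> C s a \<Longrightarrow> \<exists>x0 q0. (x0,q0) \<in> C0 s a \<and>
        x + (\<Sum>y\<in>UNIV. q y * h y) - Vr - Vp * (Max (range h) - Min (range h)) \<le> x0 + (\<Sum>y\<in>UNIV. q0 y * h y)"
    and Vp: "0 \<le> Vp"
    and single: "(\<exists>s s'::'s. s \<noteq> s') \<or> Vp = 0"
  shows "optimistic_rho (PS C) s1 \<le> optimistic_rho (PS C0) s1 + Vr + D * Vp"
proof -
  have ne: "\<And>s a. C s a \<noteq> {}" using ref by blast
  have ne0: "C0 s a \<noteq> {}" for s a
  proof -
    obtain x0 q0 where "(x0,q0) \<in> C0 s a"
      using proj[OF ref[of s a], where h="\<lambda>_. 0"] by blast
    then show ?thesis by blast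
  qed
  define S0 where "S0 = (\<lambda>(r', p'). opt_avg_reward r' p' s1) ` PS C0"
  define S1 where "S1 = (\<lambda>(r', p'). opt_avg_reward r' p' s1) ` PS C"
  have S0bdd: "bdd_above S0"
  proof (rule bdd_aboveI)
    fix v assume "v \<in> S0"
    then obtain M where M: "M \<in> PS C0" "v = (\<lambda>(r', p'). opt_avg_reward r' p' s1) M"
      unfolding S0_def by blast
    obtain r' p' where "M = (r', p')" by (cases M)
    with M have m: "(r',p') \<in> PS C0" and v: "v = opt_avg_reward r' p' s1" by simp_all
    show "v \<le> 1" unfolding v by (rule opt_le1[OF PS_valid(1,2,4)[OF valid0 m]])
  qed
  have core: "avg_reward r' p' s1 pol \<le> Sup S0 + Vr + D * Vp + e"
    if m: "(r',p') \<in> PS C" and e: "e > 0" for r' p' pol e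
  proof -
    define K where "K = \<bar>D\<bar>"
    define c where "c = K + 1"
    define d where "d = min (1/2) (e / (2 * c))"
    define \<beta> where "\<beta> = 1 - d"
    have K0: "0 \<le> K" by (simp add: K_def)
    have c0: "0 < c" "K \<le> c" using K0 by (auto simp: c_def)
    have d0: "0 < d" "d \<le> 1/2" "d \<le> e / (2 * c)"
    proof -
      have "0 < e / (2 * c)" using e c0 by simp
      then show "0 < d" by (simp add: d_def)
      show "d \<le> 1/2" unfolding d_def by (rule min.cobounded1)
      show "d \<le> e / (2 * c)" unfolding d_def by (rule min.cobounded2)
    qed
    have beta: "0 < \<beta>" "\<beta> < 1" using d0(1,2) unfolding \<beta>_def by linarith+
    have "\<exists>V. (\<forall>s. 0 \<le> V s \<and> V s \<le> 1 / (1 - \<beta>)) \<and> (\<forall>s. Top C \<beta> V s = V s)"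
      by (rule disc_fix[where C=C and \<beta>=\<beta>, OF valid ne beta])
    then obtain V where Vb: "\<And>s. 0 \<le> V s \<and> V s \<le> 1 / (1 - \<beta>)" and Vfix: "\<And>s. Top C \<beta> V s = V s"
      by blast
    define sp where "sp = Max (range V) - Min (range V)"
    define G where "G = (1 - \<beta>) * Min (range V)"
    have "Max (range V) \<in> range V" by (rule Max_in) simp_all
    then obtain smax where smax: "V smax = Max (range V)" by (metis imageE)
    have "Min (range V) \<in> range V" by (rule Min_in) simp_all
    then obtain smin where smin: "V smin = Min (range V)" by (metis imageE)
    have "V smin \<le> V smax" unfolding smax by (rule Max_ge) simp_all
    then have sp0: "0 \<le> sp" unfolding sp_def using smax smin by linarith
    have spK: "sp \<le> K \<and> Vp * sp \<le> Vp * D"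
    proof (cases "\<exists>s s'::'s. s \<noteq> s'")
      case True
      then obtain u v :: 's where uv: "u \<noteq> v" by blast
      have sb: "V s' - D \<le> V s" if ss: "s \<noteq> s'" for s s'
      proof -
        obtain pol where "(\<Sum>n. ennreal (not_hit p1 pol s' n s)) \<le> ennreal D" using hit[OF ss] by blast
        from span_bound[OF valid ref beta Vb Vfix ss this] show ?thesis .
      qed
      have "V v - D \<le> V u" by (rule sb) (use uv in auto)
      moreover have "V u - D \<le> V v" by (rule sb) (use uv in auto)
      ultimately have D0: "0 \<le> D" by linarith
      have "sp \<le> D"
      proof (cases "smin = smax")
        case True then show ?thesis using smax smin D0 by (simp add: sp_def)
      next
        case False
        have "V smax - D \<le> V smin" by (rule sb) (use False in auto)
        then show ?thesis using smax smin unfolding sp_def by linarith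
      qed
      then show ?thesis using D0 Vp by (simp add: K_def mult_left_mono)
    next
      case False
      then have "smin = smax" by blast
      then have "sp = 0" using smax smin by (simp add: sp_def)
      then show ?thesis using False single K0 by simp
    qed
    have sp_small: "(1 - \<beta>) * sp \<le> e / 2"
    proof -
      have "1 - \<beta> = d" by (simp add: \<beta>_def)
      moreover have "d * sp \<le> d * K" by (rule mult_left_mono) (use spK d0 in auto)
      ultimately have "(1 - \<beta>) * sp \<le> d * K" by simp
      also have "\<dots> \<le> e / (2 * c) * K" using d0 K0 by (intro mult_right_mono) auto
      also have "\<dots> \<le> e / (2 * c) * c"
        using e c0 by (intro mult_left_mono) auto
      also have "\<dots> = e / 2"
        using c0 by simp
      finally show ?thesis .
    qed
    note vm = PS_valid[OF valid m]
    have up: "avg_reward r' p' s1 pol \<le> G + (1 - \<beta>) * sp"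
    proof (rule avg_upper[where p=p' and pol=pol and h=V, OF vm(1,2)])
      fix s
      have "(r' s (pol s), p' s (pol s)) \<in> C s (pol s)" using m by (simp add: PS_def)
      from elem_le[where C=C and \<beta>=\<beta> and V=V, OF valid ne beta this]
      have a: "r' s (pol s) + \<beta> * (\<Sum>y\<in>UNIV. p' s (pol s) y * V y) \<le> V s" using Vfix by simp
      have b: "(\<Sum>y\<in>UNIV. p' s (pol s) y * V y) \<le> Max (range V)"
        by (rule dist_le_Max(1)) (use vm in auto)
      have "(1 - \<beta>) * (\<Sum>y\<in>UNIV. p' s (pol s) y * V y) \<le> (1 - \<beta>) * Max (range V)"
        using b beta by (intro mult_left_mono) auto
      moreover have "(1 - \<beta>) * (\<Sum>y\<in>UNIV. p' s (pol s) y * V y) = (\<Sum>y\<in>UNIV. p' s (pol s) y * V y) - \<beta> * (\<Sum>y\<in>UNIV. p' s (pol s) y * V y)"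
        by (simp add: left_diff_distrib)
      moreover have "G + (1 - \<beta>) * sp = (1 - \<beta>) * Max (range V)"
        unfolding G_def sp_def by (simp add: right_diff_distrib)
      ultimately show "r' s (pol s) + (\<Sum>y\<in>UNIV. p' s (pol s) y * V y) \<le> V s + (G + (1 - \<beta>) * sp)"
        using a by linarith
    qed
    have "\<forall>s. \<exists>t. (fst (snd t), snd (snd t)) \<in> C s (fst t) \<and>
        Top C \<beta> V s - e/2 < fst (snd t) + \<beta> * (\<Sum>y\<in>UNIV. snd (snd t) y * V y)"
    proof
      fix s
      have e2: "0 < e/2" using e by simp
      have "\<exists>a x q. (x,q) \<in> C s a \<and> Top C \<beta> V s - e/2 < x + \<beta> * (\<Sum>y\<in>UNIV. q y * V y)"
        by (rule Top_approx[where C=C and \<beta>=\<beta> and V=V and s=s, OF valid ne beta(1) beta(2) e2])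
      then obtain a x q where "(x,q) \<in> C s a" "Top C \<beta> V s - e/2 < x + \<beta> * (\<Sum>y\<in>UNIV. q y * V y)"
        by blast
      then show "\<exists>t. (fst (snd t), snd (snd t)) \<in> C s (fst t) \<and>
        Top C \<beta> V s - e/2 < fst (snd t) + \<beta> * (\<Sum>y\<in>UNIV. snd (snd t) y * V y)"
        by (intro exI[of _ "(a, x, q)"]) auto
    qed
    from choice[OF this] obtain f where f0: "\<forall>s. (fst (snd (f s)), snd (snd (f s))) \<in> C s (fst (f s)) \<and>
        Top C \<beta> V s - e/2 < fst (snd (f s)) + \<beta> * (\<Sum>y\<in>UNIV. snd (snd (f s)) y * V y)"
      by blast
    have f: "\<And>s. (fst (snd (f s)), snd (snd (f s))) \<in> C s (fst (f s))"
      "\<And>s. Top C \<beta> V s - e/2 < fst (snd (f s)) + \<beta> * (\<Sum>y\<in>UNIV. snd (snd (f s)) y * V y)"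
      using f0 by blast+
    define A where "A s = fst (f s)" for s
    define X where "X s = fst (snd (f s))" for s
    define Q where "Q s = snd (snd (f s))" for s
    have XQ: "(X s, Q s) \<in> C s (A s)" "V s - e/2 < X s + \<beta> * (\<Sum>y\<in>UNIV. Q s y * V y)" for s
      using f[of s] Vfix[of s] by (auto simp: A_def X_def Q_def)
    have "\<forall>s. \<exists>t. t \<in> C0 s (A s) \<and>
        X s + (\<Sum>y\<in>UNIV. Q s y * V y) - Vr - Vp * sp \<le> fst t + (\<Sum>y\<in>UNIV. snd t y * V y)"
    proof
      fix s
      obtain x0 q0 where "(x0,q0) \<in> C0 s (A s)"
        "X s + (\<Sum>y\<in>UNIV. Q s y * V y) - Vr - Vp * (Max (range V) - Min (range V)) \<le> x0 + (\<Sum>y\<in>UNIV. q0 y * V y)"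
        using proj[OF XQ(1)[of s], where h=V] by blast
      then show "\<exists>t. t \<in> C0 s (A s) \<and>
        X s + (\<Sum>y\<in>UNIV. Q s y * V y) - Vr - Vp * sp \<le> fst t + (\<Sum>y\<in>UNIV. snd t y * V y)"
        unfolding sp_def by (intro exI[of _ "(x0, q0)"]) simp
    qed
    from choice[OF this] obtain g where g0: "\<forall>s. g s \<in> C0 s (A s) \<and>
        X s + (\<Sum>y\<in>UNIV. Q s y * V y) - Vr - Vp * sp \<le> fst (g s) + (\<Sum>y\<in>UNIV. snd (g s) y * V y)"
      by blast
    have g: "\<And>s. g s \<in> C0 s (A s)"
      "\<And>s. X s + (\<Sum>y\<in>UNIV. Q s y * V y) - Vr - Vp * sp \<le> fst (g s) + (\<Sum>y\<in>UNIV. snd (g s) y * V y)"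
      using g0 by blast+
    define dflt where "dflt s a = (SOME t. t \<in> C0 s a)" for s a
    have dflt: "dflt s a \<in> C0 s a" for s a
      unfolding dflt_def using ne0[of s a] by (simp add: some_in_eq)
    define r'' where "r'' s a = (if a = A s then fst (g s) else fst (dflt s a))" for s a
    define p'' where "p'' s a = (if a = A s then snd (g s) else snd (dflt s a))" for s a
    have m0: "(r'', p'') \<in> PS C0"
      unfolding PS_def using g(1) dflt by (auto simp: r''_def p''_def)
    note vm0 = PS_valid[OF valid0 m0]
    have lo: "G - e/2 - Vr - Vp * sp \<le> avg_reward r'' p'' s1 A"
    proof (rule avg_lower[where p=p'' and pol=A and h=V, OF vm0(1,2)])
      fix s
      have qv: "\<forall>y. 0 \<le> Q s y" "sum (Q s) UNIV = 1" using valid[OF XQ(1)[of s]] by auto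
      have "Min (range V) \<le> (\<Sum>y\<in>UNIV. Q s y * V y)" by (rule dist_le_Max(2)) (use qv in auto)
      then have "(1 - \<beta>) * Min (range V) \<le> (1 - \<beta>) * (\<Sum>y\<in>UNIV. Q s y * V y)"
        using beta by (intro mult_left_mono) auto
      moreover have "(1 - \<beta>) * (\<Sum>y\<in>UNIV. Q s y * V y) = (\<Sum>y\<in>UNIV. Q s y * V y) - \<beta> * (\<Sum>y\<in>UNIV. Q s y * V y)"
        by (simp add: left_diff_distrib)
      ultimately have "V s + G - e/2 \<le> X s + (\<Sum>y\<in>UNIV. Q s y * V y)"
        using XQ(2)[of s] unfolding G_def by linarith
      moreover have "r'' s (A s) = fst (g s)" "p'' s (A s) = snd (g s)" by (simp_all add: r''_def p''_def)
      ultimately show "V s + (G - e/2 - Vr - Vp * sp) \<le> r'' s (A s) + (\<Sum>y\<in>UNIV. p'' s (A s) y * V y)"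
        using g(2)[of s] by simp
    qed
    have "avg_reward r'' p'' s1 A \<le> Sup S0"
    proof -
      have "opt_avg_reward r'' p'' s1 \<in> S0" unfolding S0_def by (rule rev_image_eqI[OF m0]) simp
      then have "opt_avg_reward r'' p'' s1 \<le> Sup S0" by (rule cSup_upper[OF _ S0bdd])
      then show ?thesis using opt_ge_avg[of r'' p'' s1 A] by linarith
    qed
    moreover have "D * Vp = Vp * D" by simp
    moreover have "Vp * sp \<le> Vp * D" using spK by blast
    ultimately show ?thesis using up lo sp_small by linarith
  qed
  have "Sup S1 \<le> Sup S0 + Vr + D * Vp"
  proof (rule cSup_least)
    have "(r1, p1) \<in> PS C" unfolding PS_def using ref by simp
    then show "S1 \<noteq> {}" unfolding S1_def by blast
    fix v assume "v \<in> S1"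
    then obtain M where M: "M \<in> PS C" "v = (\<lambda>(r', p'). opt_avg_reward r' p' s1) M"
      unfolding S1_def by blast
    obtain r' p' where "M = (r', p')" by (cases M)
    with M have m: "(r',p') \<in> PS C" and v: "v = opt_avg_reward r' p' s1" by simp_all
    obtain pol where "opt_avg_reward r' p' s1 = avg_reward r' p' s1 pol" using opt_is_avg by blast
    then have pol: "v = avg_reward r' p' s1 pol" using v by simp
    show "v \<le> Sup S0 + Vr + D * Vp"
    proof (rule field_le_epsilon)
      fix e :: real assume "0 < e"
      from core[OF m this, of pol] show "v \<le> Sup S0 + Vr + D * Vp + e" unfolding pol .
    qed
  qed
  then show ?thesis unfolding optimistic_rho_def S0_def S1_def .
qed



definition crad :: "real \<Rightarrow> (nat \<Rightarrow> 's::finite) \<Rightarrow> (nat \<Rightarrow> 'a::finite) \<Rightarrow> nat \<Rightarrow> 's \<Rightarrow> 'a \<Rightarrow> real" where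
  "crad \<delta> st ac tk s a = sqrt (8 * ln (8 * real (card (UNIV :: 's set)) * real (card (UNIV :: 'a set)) * real tk ^ 3 / \<delta>)
                / real (max 1 (N_count st ac tk s a)))"

definition prad :: "real \<Rightarrow> (nat \<Rightarrow> 's::finite) \<Rightarrow> (nat \<Rightarrow> 'a::finite) \<Rightarrow> nat \<Rightarrow> 's \<Rightarrow> 'a \<Rightarrow> real" where
  "prad \<delta> st ac tk s a = sqrt (8 * real (card (UNIV :: 's set)) * ln (8 * real (card (UNIV :: 's set)) * real (card (UNIV :: 'a set)) * real tk ^ 3 / \<delta>)
                / real (max 1 (N_count st ac tk s a)))"

definition Cset :: "real \<Rightarrow> real \<Rightarrow> real \<Rightarrow> (nat \<Rightarrow> 's::finite) \<Rightarrow> (nat \<Rightarrow> 'a::finite) \<Rightarrow> (nat \<Rightarrow> real) \<Rightarrow> nat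
   \<Rightarrow> 's \<Rightarrow> 'a \<Rightarrow> (real \<times> ('s \<Rightarrow> real)) set" where
  "Cset Vr Vp \<delta> st ac rw tk s a = {(x, q). 0 \<le> x \<and> x \<le> 1 \<and> (\<forall>y. 0 \<le> q y) \<and> sum q UNIV = 1 \<and>
      \<bar>x - r_hat st ac rw tk s a\<bar> \<le> Vr + crad \<delta> st ac tk s a \<and>
      (\<Sum>s'\<in>UNIV. \<bar>q s' - p_hat st ac tk s a s'\<bar>) \<le> Vp + prad \<delta> st ac tk s a}"

lemma plausible_eq:
  fixes st :: "nat \<Rightarrow> 's::finite" and ac :: "nat \<Rightarrow> 'a::finite"
  shows "plausible_set Vr Vp \<delta> st ac rw tk = PS (Cset Vr Vp \<delta> st ac rw tk)"
proof (intro set_eqI)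
  fix M :: "('s \<Rightarrow> 'a \<Rightarrow> real) \<times> ('s \<Rightarrow> 'a \<Rightarrow> 's \<Rightarrow> real)"
  obtain r' p' where M: "M = (r', p')" by (cases M)
  have "(r', p') \<in> plausible_set Vr Vp \<delta> st ac rw tk \<longleftrightarrow> (r', p') \<in> PS (Cset Vr Vp \<delta> st ac rw tk)"
    unfolding plausible_set_def PS_def Cset_def is_mdp_def crad_def prad_def
    by (simp, blast)
  then show "M \<in> plausible_set Vr Vp \<delta> st ac rw tk \<longleftrightarrow> M \<in> PS (Cset Vr Vp \<delta> st ac rw tk)"
    by (simp add: M)
qed

lemma visits_finite: "finite (visits st ac tk s a)"
  by (rule finite_subset[of _ "{..<tk}"]) (auto simp: visits_def)

lemma r_hat_bounds:
  assumes rw: "\<And>\<tau>. 0 \<le> rw \<tau> \<and> rw \<tau> \<le> 1"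
  shows "0 \<le> r_hat st ac rw tk s a \<and> r_hat st ac rw tk s a \<le> 1"
proof -
  let ?V = "visits st ac tk s a"
  have s0: "0 \<le> (\<Sum>\<tau>\<in>?V. rw \<tau>)" using rw by (intro sum_nonneg) auto
  have s1: "(\<Sum>\<tau>\<in>?V. rw \<tau>) \<le> real (card ?V)"
    using sum_mono[of ?V rw "\<lambda>_. 1"] rw by auto
  show ?thesis
  proof (cases "card ?V = 0")
    case True
    then have "?V = {}" using card_0_eq[OF visits_finite[of st ac tk s a]] by simp
    then show ?thesis by (simp add: r_hat_def)
  next
    case False
    then have "real (max 1 (N_count st ac tk s a)) = real (card ?V)" by (simp add: N_count_def)
    then show ?thesis using s0 s1 False by (simp add: r_hat_def divide_le_eq)
  qed
qed

lemma p_hat_N0: "N_count st ac tk s a = 0 \<Longrightarrow> p_hat st ac tk s a y = 0"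
  using visits_finite[of st ac tk s a] by (simp add: p_hat_def N_count_def)

lemma p_hat_dist:
  fixes st :: "nat \<Rightarrow> 's::finite"
  assumes "N_count st ac tk s a \<noteq> 0"
  shows "(\<forall>y. 0 \<le> p_hat st ac tk s a y) \<and> sum (p_hat st ac tk s a) UNIV = 1"
proof -
  let ?V = "visits st ac tk s a"
  have "(\<Sum>y\<in>UNIV. card {\<tau> \<in> ?V. st (Suc \<tau>) = y}) = card (\<Union>y. {\<tau> \<in> ?V. st (Suc \<tau>) = y})"
    by (rule card_UN_disjoint[symmetric]) (auto intro: finite_subset[OF _ visits_finite])
  also have "(\<Union>y. {\<tau> \<in> ?V. st (Suc \<tau>) = y}) = ?V" by auto
  finally have c: "(\<Sum>y\<in>UNIV. real (card {\<tau> \<in> ?V. st (Suc \<tau>) = y})) = real (card ?V)"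
    by (metis of_nat_sum)
  have "real (max 1 (N_count st ac tk s a)) = real (card ?V)" using assms by (simp add: N_count_def)
  then show ?thesis using c assms
    by (simp add: p_hat_def sum_divide_distrib[symmetric] N_count_def)
qed

lemma log_arg:
  fixes tk :: nat and \<delta> :: real
  assumes "1 \<le> tk" "0 < \<delta>" "\<delta> < 1"
  shows "1 \<le> ln (8 * real (card (UNIV :: 's::finite set)) * real (card (UNIV :: 'a::finite set)) * real tk ^ 3 / \<delta>)"
proof -
  define z where "z = 8 * real (card (UNIV :: 's set)) * real (card (UNIV :: 'a set)) * real tk ^ 3"
  have S: "1 \<le> real (card (UNIV :: 's set))" "1 \<le> real (card (UNIV :: 'a set))"
    using finite_UNIV_card_ge_0[where 'a='s] finite_UNIV_card_ge_0[where 'a='a] by auto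
  have "1 \<le> real tk ^ 3" using assms(1) by simp
  moreover have "1 * 1 \<le> real (card (UNIV :: 's set)) * real (card (UNIV :: 'a set))"
    by (rule mult_mono) (use S in auto)
  ultimately have "1 * 1 \<le> real (card (UNIV :: 's set)) * real (card (UNIV :: 'a set)) * real tk ^ 3"
    by (intro mult_mono) auto
  then have z8: "8 \<le> z" unfolding z_def by (simp add: mult.assoc)
  have "z \<le> z / \<delta>" using assms z8 by (simp add: le_divide_eq)
  then have "8 \<le> z / \<delta>" using z8 by linarith
  moreover have "exp 1 \<le> (8::real)" using e_less_272 by simp
  ultimately have "exp 1 \<le> z / \<delta>" by linarith
  then show ?thesis using ln_ge_iff[of "z / \<delta>" 1] z8 assms by (simp add: z_def)
qed



lemma diff_bound:
  fixes u v h :: "'s::finite \<Rightarrow> real"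
  assumes "sum u UNIV = 1" "sum v UNIV = 1"
  shows "(\<Sum>y\<in>UNIV. u y * h y) - (\<Sum>y\<in>UNIV. v y * h y) \<le> (\<Sum>y\<in>UNIV. \<bar>u y - v y\<bar>) * (Max (range h) - Min (range h))"
proof -
  define m where "m = Min (range h)"
  define M where "M = Max (range h)"
  have hm: "m \<le> h y" "h y \<le> M" for y unfolding m_def M_def by (simp_all add: Min_le Max_ge)
  have "(\<Sum>y\<in>UNIV. u y * h y) - (\<Sum>y\<in>UNIV. v y * h y) = (\<Sum>y\<in>UNIV. (u y - v y) * (h y - m)) + m * (sum u UNIV - sum v UNIV)"
    by (simp add: algebra_simps sum_subtractf sum.distrib sum_distrib_left sum_distrib_right)
  also have "\<dots> = (\<Sum>y\<in>UNIV. (u y - v y) * (h y - m))" using assms by simp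
  also have "\<dots> \<le> (\<Sum>y\<in>UNIV. \<bar>u y - v y\<bar> * (M - m))"
  proof (rule sum_mono)
    fix y
    have "(u y - v y) * (h y - m) \<le> \<bar>u y - v y\<bar> * (h y - m)"
      using hm[of y] by (intro mult_right_mono) auto
    also have "\<dots> \<le> \<bar>u y - v y\<bar> * (M - m)"
      using hm[of y] by (intro mult_left_mono) auto
    finally show "(u y - v y) * (h y - m) \<le> \<bar>u y - v y\<bar> * (M - m)" .
  qed
  also have "\<dots> = (\<Sum>y\<in>UNIV. \<bar>u y - v y\<bar>) * (M - m)" by (simp add: sum_distrib_right)
  finally show ?thesis by (simp add: m_def M_def)
qed

lemma proj_concrete:
  fixes st :: "nat \<Rightarrow> 's::finite" and ac :: "nat \<Rightarrow> 'a::finite" and h :: "'s \<Rightarrow> real"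
  assumes Vr: "0 \<le> Vr" and Vp: "0 \<le> Vp" and tk: "1 \<le> tk" and delta: "0 < \<delta>" "\<delta> < 1"
    and rw: "\<And>\<tau>. 0 \<le> rw \<tau> \<and> rw \<tau> \<le> 1"
    and xq: "(x, q) \<in> Cset Vr Vp \<delta> st ac rw tk s a"
  shows "\<exists>x0 q0. (x0, q0) \<in> Cset 0 0 \<delta> st ac rw tk s a \<and>
    x + (\<Sum>y\<in>UNIV. q y * h y) - Vr - Vp * (Max (range h) - Min (range h)) \<le> x0 + (\<Sum>y\<in>UNIV. q0 y * h y)"
proof -
  define rh where "rh = r_hat st ac rw tk s a"
  define ph where "ph = p_hat st ac tk s a"
  define c1 where "c1 = crad \<delta> st ac tk s a"
  define c2 where "c2 = prad \<delta> st ac tk s a"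
  define N where "N = N_count st ac tk s a"
  define L where "L = ln (8 * real (card (UNIV :: 's set)) * real (card (UNIV :: 'a set)) * real tk ^ 3 / \<delta>)"
  have L1: "1 \<le> L" unfolding L_def by (rule log_arg[OF tk delta])
  have S1: "1 \<le> real (card (UNIV :: 's set))" using finite_UNIV_card_ge_0[where 'a='s] by auto
  have Npos: "0 < real (max 1 N)" by simp
  have c1: "0 \<le> c1" unfolding c1_def crad_def L_def[symmetric] N_def[symmetric]
    using L1 Npos by simp
  have c2: "0 \<le> c2" unfolding c2_def prad_def L_def[symmetric] N_def[symmetric]
    using L1 Npos S1 by simp
  have c2N: "1 \<le> c2" if "N = 0"
  proof -
    have h1: "1 * 1 \<le> real (card (UNIV :: 's set)) * L"
      by (rule mult_mono) (use L1 S1 in auto)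
    have h2: "8 * real (card (UNIV :: 's set)) * L = 8 * (real (card (UNIV :: 's set)) * L)" by simp
    have "1 \<le> 8 * real (card (UNIV :: 's set)) * L"
      using h1 h2 by linarith
    then show ?thesis unfolding c2_def prad_def L_def[symmetric] N_def[symmetric] using that by simp
  qed
  have rh: "0 \<le> rh" "rh \<le> 1" using r_hat_bounds[where rw=rw and st=st and ac=ac and tk=tk and s=s and a=a] rw by (auto simp: rh_def)
  from xq have x: "0 \<le> x" "x \<le> 1" "\<forall>y. 0 \<le> q y" "sum q UNIV = 1" "\<bar>x - rh\<bar> \<le> Vr + c1"
    "(\<Sum>y\<in>UNIV. \<bar>q y - ph y\<bar>) \<le> Vp + c2"
    by (auto simp: Cset_def rh_def ph_def c1_def c2_def)
  define x0 where "x0 = max (rh - c1) (min (rh + c1) x)"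
  have x0: "0 \<le> x0" "x0 \<le> 1" "\<bar>x0 - rh\<bar> \<le> 0 + c1" "x - Vr \<le> x0"
    using x rh c1 Vr unfolding x0_def by (auto simp: max_def min_def abs_if split: if_splits)
  define sp where "sp = Max (range h) - Min (range h)"
  have sp: "0 \<le> sp" unfolding sp_def
    using Min_le[of "range h" "h undefined"] Max_ge[of "range h" "h undefined"] by simp
  define d where "d = (\<Sum>y\<in>UNIV. \<bar>q y - ph y\<bar>)"
  show ?thesis
  proof (cases "d \<le> c2")
    case True
    have "(x0, q) \<in> Cset 0 0 \<delta> st ac rw tk s a"
      using x x0 True by (simp add: Cset_def rh_def ph_def c1_def c2_def d_def)
    moreover have "x + (\<Sum>y\<in>UNIV. q y * h y) - Vr - Vp * sp \<le> x0 + (\<Sum>y\<in>UNIV. q y * h y)"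
    proof -
      have "0 \<le> Vp * sp" using Vp sp by simp
      then show ?thesis using x0(4) by linarith
    qed
    ultimately show ?thesis unfolding sp_def by blast
  next
    case False
    have N0: "N \<noteq> 0"
    proof
      assume N: "N = 0"
      have "ph y = 0" for y unfolding ph_def using p_hat_N0 N by (simp add: N_def)
      then have "d = 1" using x by (simp add: d_def)
      then show False using False c2N[OF N] by simp
    qed
    have ph: "\<forall>y. 0 \<le> ph y" "sum ph UNIV = 1" using p_hat_dist[of st ac tk s a] N0 by (auto simp: ph_def N_def)
    have dpos: "0 < d" using False c2 by simp
    define l where "l = c2 / d"
    have l: "0 \<le> l" "l \<le> 1" using c2 dpos False by (auto simp: l_def)
    define q0 where "q0 y = l * q y + (1 - l) * ph y" for y
    have q0nn: "\<forall>y. 0 \<le> q0 y" using x ph l by (auto simp: q0_def)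
    have q0sum: "sum q0 UNIV = 1"
      using x ph by (simp add: q0_def sum.distrib sum_distrib_left[symmetric])
    have "(\<Sum>y\<in>UNIV. \<bar>q0 y - ph y\<bar>) = (\<Sum>y\<in>UNIV. l * \<bar>q y - ph y\<bar>)"
    proof (rule sum.cong)
      fix y
      have "q0 y - ph y = l * (q y - ph y)" by (simp add: q0_def algebra_simps)
      then show "\<bar>q0 y - ph y\<bar> = l * \<bar>q y - ph y\<bar>" using l by (simp add: abs_mult)
    qed simp
    also have "\<dots> = l * d" by (simp add: d_def sum_distrib_left)
    also have "\<dots> = c2" using dpos by (simp add: l_def)
    finally have q0d: "(\<Sum>y\<in>UNIV. \<bar>q0 y - ph y\<bar>) = c2" .
    have inC: "(x0, q0) \<in> Cset 0 0 \<delta> st ac rw tk s a"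
      using x0 q0nn q0sum q0d by (simp add: Cset_def rh_def ph_def c1_def c2_def)
    have eq: "(\<Sum>y\<in>UNIV. q0 y * h y) = l * (\<Sum>y\<in>UNIV. q y * h y) + (1 - l) * (\<Sum>y\<in>UNIV. ph y * h y)"
    proof -
      have "(\<Sum>y\<in>UNIV. q0 y * h y) = (\<Sum>y\<in>UNIV. l * (q y * h y) + (1 - l) * (ph y * h y))"
        by (rule sum.cong) (simp_all add: q0_def algebra_simps)
      also have "\<dots> = l * (\<Sum>y\<in>UNIV. q y * h y) + (1 - l) * (\<Sum>y\<in>UNIV. ph y * h y)"
        by (simp add: sum.distrib sum_distrib_left)
      finally show ?thesis .
    qed
    have db: "(\<Sum>y\<in>UNIV. q y * h y) - (\<Sum>y\<in>UNIV. ph y * h y) \<le> d * sp"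
      unfolding d_def sp_def by (rule diff_bound) (use x ph in auto)
    have "(\<Sum>y\<in>UNIV. q y * h y) - (\<Sum>y\<in>UNIV. q0 y * h y) = (1 - l) * ((\<Sum>y\<in>UNIV. q y * h y) - (\<Sum>y\<in>UNIV. ph y * h y))"
      unfolding eq by (simp add: algebra_simps)
    also have "\<dots> \<le> (1 - l) * (d * sp)" using db l by (intro mult_left_mono) auto
    also have "\<dots> = (d - c2) * sp" using dpos by (simp add: l_def algebra_simps)
    also have "\<dots> \<le> Vp * sp" using x(6) sp by (intro mult_right_mono) (auto simp: d_def)
    finally have "x + (\<Sum>y\<in>UNIV. q y * h y) - Vr - Vp * sp \<le> x0 + (\<Sum>y\<in>UNIV. q0 y * h y)"
      using x0 by linarith
    with inC show ?thesis unfolding sp_def by blast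
  qed
qed



lemma Max_range_nonneg: "(\<And>z. 0 \<le> F z) \<Longrightarrow> 0 \<le> Max (range (F :: 'b::finite \<Rightarrow> real))"
  by (rule order_trans[OF _ Max_ge[of _ "F undefined"]]) auto

lemma var_r_nonneg: "0 \<le> var_r rb T"
  unfolding var_r_def by (intro sum_nonneg Max_range_nonneg) (auto split: prod.splits)

lemma var_p_nonneg: "0 \<le> var_p pb T"
  unfolding var_p_def by (intro sum_nonneg Max_range_nonneg) (auto split: prod.splits intro: sum_nonneg)

hide_const (open) Elementary_Metric_Spaces.diameter

theorem lemma9:
  fixes rb :: "nat \<Rightarrow> 's::finite \<Rightarrow> 'a::finite \<Rightarrow> real"
    and pb :: "nat \<Rightarrow> 's \<Rightarrow> 'a \<Rightarrow> 's \<Rightarrow> real"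
    and s1 :: 's and D :: real and T tk :: nat and \<delta> :: real
    and st :: "nat \<Rightarrow> 's" and ac :: "nat \<Rightarrow> 'a" and rw :: "nat \<Rightarrow> real"
  assumes env: "\<And>t. 1 \<le> t \<Longrightarrow> is_mdp (rb t) (pb t) \<and> communicating (pb t) \<and> diameter (pb t) \<le> ennreal D"
    and T: "1 \<le> T"
    and tk: "1 \<le> tk" "tk \<le> T"
    and delta: "0 < \<delta>" "\<delta> < 1"
    and rewards: "\<And>\<tau>. 0 \<le> rw \<tau> \<and> rw \<tau> \<le> 1"
    and contains: "\<And>\<tau>. 1 \<le> \<tau> \<Longrightarrow> \<tau> \<le> T \<Longrightarrow>
        (rb \<tau>, pb \<tau>) \<in> plausible_set (var_r rb T) (var_p pb T) \<delta> st ac rw tk"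
  shows "optimistic_rho (plausible_set (var_r rb T) (var_p pb T) \<delta> st ac rw tk) s1
         \<le> optimistic_rho (plausible_set 0 0 \<delta> st ac rw tk) s1 + var_r rb T + D * var_p pb T"
proof -
  define C where "C = Cset (var_r rb T) (var_p pb T) \<delta> st ac rw tk"
  define C0 where "C0 = Cset 0 0 \<delta> st ac rw tk"
  have valid: "\<And>s a x q. (x,q) \<in> C s a \<Longrightarrow> 0 \<le> x \<and> x \<le> 1 \<and> (\<forall>y. 0 \<le> q y) \<and> sum q UNIV = 1"
    by (simp add: C_def Cset_def)
  have valid0: "\<And>s a x q. (x,q) \<in> C0 s a \<Longrightarrow> 0 \<le> x \<and> x \<le> 1 \<and> (\<forall>y. 0 \<le> q y) \<and> sum q UNIV = 1"
    by (simp add: C0_def Cset_def)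
  have "(rb 1, pb 1) \<in> PS C" using contains[OF order_refl T] by (simp add: plausible_eq C_def)
  then have ref: "\<And>s a. (rb 1 s a, pb 1 s a) \<in> C s a" by (simp add: PS_def)
  have hit: "\<exists>pol. (\<Sum>n. ennreal (not_hit (pb 1) pol s' n s)) \<le> ennreal D" if ss: "s \<noteq> s'" for s s'
  proof -
    define A where "A = range (\<lambda>pol. exp_hit_time (pb 1) pol s s')"
    have "Inf A \<in> A"
    proof (rule finite_Inf_in)
      show "finite A" unfolding A_def by simp
      show "A \<noteq> {}" unfolding A_def by simp
      fix x y assume "x \<in> A" "y \<in> A"
      then show "inf x y \<in> A" by (cases "x \<le> y") (simp_all add: inf_absorb1 inf_absorb2)
    qed
    then obtain pol where pol: "exp_hit_time (pb 1) pol s s' = Inf A" unfolding A_def by auto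
    have "Inf A \<le> diameter (pb 1)"
      unfolding Defs.diameter_def A_def
      by (rule SUP_upper2[where i="(s, s')"]) (use ss in auto)
    also have "\<dots> \<le> ennreal D" using env[of 1] by simp
    finally have "exp_hit_time (pb 1) pol s s' \<le> ennreal D" using pol by simp
    then show ?thesis unfolding exp_hit_time_def by blast
  qed
  have proj: "\<And>s a x q h. (x,q) \<in> C s a \<Longrightarrow> \<exists>x0 q0. (x0,q0) \<in> C0 s a \<and>
        x + (\<Sum>y\<in>UNIV. q y * h y) - var_r rb T - var_p pb T * (Max (range h) - Min (range h)) \<le> x0 + (\<Sum>y\<in>UNIV. q0 y * h y)"
    unfolding C_def C0_def
    by (rule proj_concrete[OF var_r_nonneg var_p_nonneg tk(1) delta rewards])
  have single: "(\<exists>s s'::'s. s \<noteq> s') \<or> var_p pb T = 0"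
  proof (cases "\<exists>s s'::'s. s \<noteq> s'")
    case False
    then have eq: "\<And>s s'::'s. s = s'" by blast
    have one: "pb t s a s' = 1" if "1 \<le> t" for t s a s'
    proof -
      have "UNIV = {s'}" using eq by blast
      then have "sum (pb t s a) UNIV = sum (pb t s a) {s'}" by (rule arg_cong)
      then have "sum (pb t s a) UNIV = pb t s a s'" by simp
      then show ?thesis using env[OF that] by (simp add: is_mdp_def)
    qed
    have "var_p pb T = (\<Sum>t\<in>{1..<T}. Max (range (\<lambda>_::'s \<times> 'a. 0::real)))"
      unfolding var_p_def
      by (rule sum.cong) (auto simp: one intro!: arg_cong[where f=Max])
    then show ?thesis by simp
  qed simp
  have "optimistic_rho (PS C) s1 \<le> optimistic_rho (PS C0) s1 + var_r rb T + D * var_p pb T"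
    by (rule abstract_main[OF valid valid0 ref hit proj var_p_nonneg single])
  then show ?thesis by (simp add: plausible_eq C_def C0_def)
qed

end
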